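(* Let $\Gamma$ be a non-amenable group with property RD$_p$ for some $p\in[1,2]$. Then $\mathrm{Lit}(\Gamma)\ge p$.
   Context: For $1\le p<\infty$, $\Gamma$ has property RD$_p$ if there exist a length function $L$ on $\Gamma$ (i.e. $L\colon\Gamma\to[0,\infty)$ with $L(e)=0$, $L(g^{-1})=L(g)$, $L(gh)\le L(g)+L(h)$) and a polynomial $P$ such that $\|a\|_{p\to p}\le P(d)\|a\|_p$ for every $a\in\mathbf{C}[\Gamma]$ supported in the $L$-ball of radius $d\ge0$, where $\|a\|_{p\to p}$ is the operator norm of left convolution by $a$ on $\ell^p(\Gamma)$. $T_1(\Gamma)$ is the space of all $f\colon\Gamma\to\mathbf{C}$ for which there exist $f_1,f_2\colon\Gamma\times\Gamma\to\mathbf{C}$ with $f(x^{-1}y)=f_1(x,y)+f_2(x,y)$ for all $x,y$, $\sup_x\sum_y|f_1(x,y)|<\infty$, $\sup_y\sum_x|f_2(x,y)|<\infty$; $\mathrm{Lit}(\Gamma)=\inf\{q>0:T_1(\Gamma)\subseteq\ell^q(\Gamma)\}$. *)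

theory Defs
  imports "HOL-Analysis.Analysis" "HOL-Algebra.Group" "HOL-Computational_Algebra.Polynomial"
begin

text \<open>A discrete group is a HOL-Algebra group G; functions on the group are
  functions on the carrier (values outside the carrier are irrelevant).\<close>

definition lp_space :: "('a, 'b) monoid_scheme \<Rightarrow> real \<Rightarrow> ('a \<Rightarrow> complex) set" where
  "lp_space G q = {f. (\<lambda>x. norm (f x) powr q) summable_on carrier G}"

definition lp_norm :: "('a, 'b) monoid_scheme \<Rightarrow> real \<Rightarrow> ('a \<Rightarrow> complex) \<Rightarrow> real" where
  "lp_norm G q f = (infsum (\<lambda>x. norm (f x) powr q) (carrier G)) powr (1 / q)"

definition length_function :: "('a, 'b) monoid_scheme \<Rightarrow> ('a \<Rightarrow> real) \<Rightarrow> bool" where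
  "length_function G L \<longleftrightarrow>
     (\<forall>g\<in>carrier G. L g \<ge> 0) \<and> L \<one>\<^bsub>G\<^esub> = 0 \<and>
     (\<forall>g\<in>carrier G. L (inv\<^bsub>G\<^esub> g) = L g) \<and>
     (\<forall>g\<in>carrier G. \<forall>h\<in>carrier G. L (g \<otimes>\<^bsub>G\<^esub> h) \<le> L g + L h)"

definition group_algebra :: "('a, 'b) monoid_scheme \<Rightarrow> ('a \<Rightarrow> complex) set" where
  "group_algebra G = {a. finite {x \<in> carrier G. a x \<noteq> 0}}"

definition conv :: "('a, 'b) monoid_scheme \<Rightarrow> ('a \<Rightarrow> complex) \<Rightarrow> ('a \<Rightarrow> complex) \<Rightarrow> 'a \<Rightarrow> complex" where
  "conv G a f x = (\<Sum>y\<in>{y \<in> carrier G. a y \<noteq> 0}. a y * f (inv\<^bsub>G\<^esub> y \<otimes>\<^bsub>G\<^esub> x))"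

text \<open>Property RD_p: ||a||_{p->p} <= P(d) ||a||_p for a supported in the L-ball of radius d;
  the operator-norm bound is written out as the inequality for all f in l^p.\<close>
definition property_RD :: "('a, 'b) monoid_scheme \<Rightarrow> real \<Rightarrow> bool" where
  "property_RD G p \<longleftrightarrow>
     (\<exists>L (P :: real poly). length_function G L \<and>
        (\<forall>d \<ge> 0. \<forall>a \<in> group_algebra G.
           (\<forall>x\<in>carrier G. a x \<noteq> 0 \<longrightarrow> L x \<le> d) \<longrightarrow>
           (\<forall>f \<in> lp_space G p.
              lp_norm G p (conv G a f) \<le> poly P d * lp_norm G p a * lp_norm G p f)))"

definition bounded_on :: "'a set \<Rightarrow> ('a \<Rightarrow> real) \<Rightarrow> bool" where
  "bounded_on S f \<longleftrightarrow> (\<exists>C. \<forall>x\<in>S. \<bar>f x\<bar> \<le> C)"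

definition amenable :: "('a, 'b) monoid_scheme \<Rightarrow> bool" where
  "amenable G \<longleftrightarrow>
     (\<exists>m :: ('a \<Rightarrow> real) \<Rightarrow> real.
        (\<forall>f g. bounded_on (carrier G) f \<longrightarrow> bounded_on (carrier G) g \<longrightarrow>
            m (\<lambda>x. f x + g x) = m f + m g) \<and>
        (\<forall>f c. bounded_on (carrier G) f \<longrightarrow> m (\<lambda>x. c * f x) = c * m f) \<and>
        (\<forall>f. bounded_on (carrier G) f \<longrightarrow> (\<forall>x\<in>carrier G. f x \<ge> 0) \<longrightarrow> m f \<ge> 0) \<and>
        m (\<lambda>x. 1) = 1 \<and>
        (\<forall>f. \<forall>g\<in>carrier G. bounded_on (carrier G) f \<longrightarrow>
            m (\<lambda>x. f (g \<otimes>\<^bsub>G\<^esub> x)) = m f))"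

definition T1 :: "('a, 'b) monoid_scheme \<Rightarrow> ('a \<Rightarrow> complex) set" where
  "T1 G = {f. \<exists>f1 f2 :: 'a \<Rightarrow> 'a \<Rightarrow> complex.
      (\<forall>x\<in>carrier G. \<forall>y\<in>carrier G. f (inv\<^bsub>G\<^esub> x \<otimes>\<^bsub>G\<^esub> y) = f1 x y + f2 x y) \<and>
      (\<exists>C. \<forall>x\<in>carrier G. (\<lambda>y. norm (f1 x y)) summable_on carrier G \<and>
                          infsum (\<lambda>y. norm (f1 x y)) (carrier G) \<le> C) \<and>
      (\<exists>C. \<forall>y\<in>carrier G. (\<lambda>x. norm (f2 x y)) summable_on carrier G \<and>
                          infsum (\<lambda>x. norm (f2 x y)) (carrier G) \<le> C)}"

text \<open>Lit(G) = inf {q > 0. T_1(G) \<subseteq> l^q(G)}, as an extended real (inf of empty set = \<infinity>).\<close>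
definition Lit :: "('a, 'b) monoid_scheme \<Rightarrow> ereal" where
  "Lit G = Inf {ereal q | q. q > 0 \<and> T1 G \<subseteq> lp_space G q}"

end

theory Submission
  imports Defs "HOL-Real_Asymp.Real_Asymp"
begin


definition pfilt :: "nat set set \<Rightarrow> bool" where
  "pfilt U \<longleftrightarrow> {} \<notin> U \<and> (\<forall>A\<in>U. \<forall>B\<in>U. A \<inter> B \<in> U) \<and> (\<forall>A B. A \<in> U \<longrightarrow> A \<subseteq> B \<longrightarrow> B \<in> U)
     \<and> (\<forall>N. {N..} \<in> U)"

lemma ultra_exists: "\<exists>U. pfilt U \<and> (\<forall>S. S \<in> U \<or> - S \<in> U)"
proof -
  let ?A = "{U. pfilt U}"
  have "\<exists>M\<in>?A. \<forall>X\<in>?A. M \<subseteq> X \<longrightarrow> X = M"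
  proof (rule Zorn_Lemma2, intro ballI)
    fix C assume C: "C \<in> chains ?A"
    show "\<exists>U\<in>?A. \<forall>X\<in>C. X \<subseteq> U"
    proof (cases "C = {}")
      case True
      have "pfilt {S. \<exists>N::nat. {N..} \<subseteq> S}"
        unfolding pfilt_def
      proof (intro conjI ballI allI impI)
        show "{} \<notin> {S. \<exists>N::nat. {N..} \<subseteq> S}"
        proof
          assume "{} \<in> {S. \<exists>N::nat. {N..} \<subseteq> S}"
          then obtain N where "{N..} \<subseteq> ({}::nat set)" unfolding mem_Collect_eq by blast
          moreover have "N \<in> {N..}" by simp
          ultimately show False by blast
        qed
      next
        fix A B assume "A \<in> {S. \<exists>N::nat. {N..} \<subseteq> S}" "B \<in> {S. \<exists>N::nat. {N..} \<subseteq> S}"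
        then obtain N1 N2 where "{N1..} \<subseteq> A" "{N2..} \<subseteq> B" by auto
        then have "{max N1 N2..} \<subseteq> A \<inter> B" by auto
        then show "A \<inter> B \<in> {S. \<exists>N::nat. {N..} \<subseteq> S}" by blast
      qed auto
      then show ?thesis using True by auto
    next
      case False
      have ch: "\<And>X Y. X \<in> C \<Longrightarrow> Y \<in> C \<Longrightarrow> X \<subseteq> Y \<or> Y \<subseteq> X"
        using C by (auto simp: chains_def chain_subset_def)
      have pf: "\<And>X. X \<in> C \<Longrightarrow> pfilt X" using C by (auto simp: chains_def)
      have "pfilt (\<Union>C)"
        unfolding pfilt_def
      proof (intro conjI ballI allI impI)
        show "{} \<notin> \<Union>C" using pf by (auto simp: pfilt_def)
      next
        fix A B assume "A \<in> \<Union>C" "B \<in> \<Union>C"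
        then obtain X Y where "X \<in> C" "Y \<in> C" "A \<in> X" "B \<in> Y" by auto
        show "A \<inter> B \<in> \<Union>C"
        proof (cases "X \<subseteq> Y")
          case True
          then have "A \<in> Y" using \<open>A \<in> X\<close> by blast
          then have "A \<inter> B \<in> Y" using pf[OF \<open>Y \<in> C\<close>] \<open>B \<in> Y\<close> unfolding pfilt_def by blast
          then show ?thesis using \<open>Y \<in> C\<close> by blast
        next
          case False
          then have "B \<in> X" using ch[OF \<open>X \<in> C\<close> \<open>Y \<in> C\<close>] \<open>B \<in> Y\<close> by blast
          then have "A \<inter> B \<in> X" using pf[OF \<open>X \<in> C\<close>] \<open>A \<in> X\<close> unfolding pfilt_def by blast
          then show ?thesis using \<open>X \<in> C\<close> by blast
        qed
      next
        fix A B assume "A \<in> \<Union>C" "A \<subseteq> B"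
        then show "B \<in> \<Union>C" using pf unfolding pfilt_def by blast
      next
        fix N show "{N..} \<in> \<Union>C" using pf False unfolding pfilt_def by blast
      qed
      then show ?thesis by auto
    qed
  qed
  then obtain M where M: "pfilt M" and max: "\<And>X. pfilt X \<Longrightarrow> M \<subseteq> X \<Longrightarrow> X = M" by auto
  have "S \<in> M \<or> - S \<in> M" for S
  proof (rule ccontr)
    assume nS: "\<not> (S \<in> M \<or> - S \<in> M)"
    let ?M' = "{T. \<exists>V\<in>M. V \<inter> S \<subseteq> T}"
    have p': "pfilt ?M'"
      unfolding pfilt_def
    proof (intro conjI ballI allI impI)
      show "{} \<notin> ?M'"
      proof
        assume "{} \<in> ?M'"
        then obtain V where "V \<in> M" "V \<inter> S \<subseteq> {}" by auto
        then have "V \<subseteq> - S" by auto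
        then show False using nS M \<open>V \<in> M\<close> unfolding pfilt_def by blast
      qed
    next
      fix A B assume "A \<in> ?M'" "B \<in> ?M'"
      then obtain V W where "V \<in> M" "W \<in> M" "V \<inter> S \<subseteq> A" "W \<inter> S \<subseteq> B" by auto
      moreover have "V \<inter> W \<in> M" using M \<open>V \<in> M\<close> \<open>W \<in> M\<close> unfolding pfilt_def by blast
      ultimately show "A \<inter> B \<in> ?M'" by blast
    next
      fix A B assume "A \<in> ?M'" "A \<subseteq> B" then show "B \<in> ?M'" by blast
    next
      fix N show "{N..} \<in> ?M'" using M unfolding pfilt_def by blast
    qed
    have "M \<subseteq> ?M'" by blast
    then have "?M' = M" using max p' by blast
    moreover have "S \<in> ?M'"
    proof -
      have "{0..} \<in> M" using M unfolding pfilt_def by blast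
      then show ?thesis by blast
    qed
    ultimately show False using nS by blast
  qed
  then show ?thesis using M by blast
qed

lemma ultrafilter_nat_exists:
  "\<exists>F :: nat filter. F \<noteq> bot \<and> F \<le> sequentially \<and> (\<forall>P. eventually P F \<or> eventually (\<lambda>x. \<not> P x) F)"
proof -
  obtain U where U: "pfilt U" "\<And>S. S \<in> U \<or> - S \<in> U" using ultra_exists by blast
  have U0: "{} \<notin> U" and Ui: "\<And>A B. A \<in> U \<Longrightarrow> B \<in> U \<Longrightarrow> A \<inter> B \<in> U"
    and Um: "\<And>A B. A \<in> U \<Longrightarrow> A \<subseteq> B \<Longrightarrow> B \<in> U" and Ut: "\<And>N. {N..} \<in> U"
    using U(1) unfolding pfilt_def by auto
  have isf: "is_filter (\<lambda>P. {n. P n} \<in> U)"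
  proof (rule is_filter.intro)
    have "{n::nat. True} = {0..}" by auto
    then show "{n. True} \<in> U" using Ut[of 0] by simp
  next
    fix P Q assume "{n. P n} \<in> U" "{n. Q n} \<in> U"
    from Ui[OF this] show "{n. P n \<and> Q n} \<in> U" by (simp add: Collect_conj_eq)
  next
    fix P Q assume a: "\<forall>x. P x \<longrightarrow> Q x" "{n. P n} \<in> U"
    have "{n. P n} \<subseteq> {n. Q n}" using a(1) by auto
    from Um[OF a(2) this] show "{n. Q n} \<in> U" .
  qed
  define F where "F = Abs_filter (\<lambda>P. {n. P n} \<in> U)"
  have ev: "eventually P F \<longleftrightarrow> {n. P n} \<in> U" for P
    unfolding F_def by (rule eventually_Abs_filter[OF isf])
  have "F \<noteq> bot"
  proof
    assume "F = bot"
    then have "eventually (\<lambda>_. False) F" by simp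
    then have "{n::nat. False} \<in> U" by (simp only: ev)
    then show False using U0 by simp
  qed
  moreover have "F \<le> sequentially"
    unfolding le_filter_def
  proof (intro allI impI)
    fix P assume "eventually P sequentially"
    then obtain N where "\<And>n. n \<ge> N \<Longrightarrow> P n" by (auto simp: eventually_sequentially)
    then have "{N..} \<subseteq> {n. P n}" by auto
    from Um[OF Ut this] show "eventually P F" by (simp only: ev)
  qed
  moreover have "eventually P F \<or> eventually (\<lambda>x. \<not> P x) F" for P
  proof -
    have "- {n. P n} = {n. \<not> P n}" by auto
    then show ?thesis using U(2)[of "{n. P n}"] by (simp only: ev)
  qed
  ultimately show ?thesis by blast
qed

lemma ultra_tendsto:
  fixes F :: "nat filter" and s :: "nat \<Rightarrow> real"
  assumes F: "F \<noteq> bot" "\<forall>P. eventually P F \<or> eventually (\<lambda>x. \<not> P x) F"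
    and b: "\<And>n. \<bar>s n\<bar> \<le> C"
  shows "(s \<longlongrightarrow> Lim F s) F"
proof -
  have cpt: "compact {-C..C}" by simp
  have "filtermap s F \<noteq> bot" using F(1) by (simp add: filtermap_bot_iff)
  moreover have "eventually (\<lambda>x. x \<in> {-C..C}) (filtermap s F)"
  proof -
    have "s n \<in> {-C..C}" for n using b[of n] by auto
    then show ?thesis by (auto simp: eventually_filtermap intro!: always_eventually)
  qed
  ultimately obtain x where "x \<in> {-C..C}" and nb: "inf (nhds x) (filtermap s F) \<noteq> bot"
    using cpt unfolding compact_filter by blast
  have "(s \<longlongrightarrow> x) F"
  proof (rule topological_tendstoI)
    fix V assume "open V" "x \<in> V"
    show "eventually (\<lambda>n. s n \<in> V) F"
    proof (rule ccontr)
      assume "\<not> eventually (\<lambda>n. s n \<in> V) F"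
      then have "eventually (\<lambda>n. s n \<notin> V) F" using F(2) by blast
      then have e1: "eventually (\<lambda>y. y \<notin> V) (filtermap s F)" by (simp add: eventually_filtermap)
      have e2: "eventually (\<lambda>y. y \<in> V) (nhds x)" using \<open>open V\<close> \<open>x \<in> V\<close> by (rule eventually_nhds_in_open)
      have "eventually (\<lambda>_. False) (inf (nhds x) (filtermap s F))"
        unfolding eventually_inf using e1 e2 by blast
      then show False using nb by (simp add: trivial_limit_def)
    qed
  qed
  then show ?thesis using F(1) by (simp add: tendsto_Lim)
qed


definition gball :: "('a, 'b) monoid_scheme \<Rightarrow> ('a \<Rightarrow> real) \<Rightarrow> real \<Rightarrow> 'a set" where
  "gball G L d = {x \<in> carrier G. L x \<le> d}"

lemma exp_beats_poly:
  fixes j :: nat and C k :: real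
  assumes j: "j \<ge> 1" and k: "k \<ge> 0"
  shows "\<not> (\<forall>i::nat. (1 + 1 / real j) ^ i \<le> C * (1 + real j * real i) powr k)"
proof
  assume H: "\<forall>i::nat. (1 + 1 / real j) ^ i \<le> C * (1 + real j * real i) powr k"
  define a where "a = 1 + 1 / real j"
  have a1: "a > 1" using j by (simp add: a_def)
  have lim: "filterlim (\<lambda>i::nat. a ^ i / (1 + real i) powr k) at_top at_top"
    using a1 by real_asymp
  then have "eventually (\<lambda>i. a ^ i / (1 + real i) powr k > \<bar>C\<bar> * real j powr k) sequentially"
    by (simp add: filterlim_at_top_dense)
  then obtain i where i: "a ^ i / (1 + real i) powr k > \<bar>C\<bar> * real j powr k"
    by (meson eventually_sequentially order_refl)
  have pos: "(1 + real i) powr k > 0" by simp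
  have g1: "a ^ i > \<bar>C\<bar> * real j powr k * (1 + real i) powr k"
    using i pos by (simp add: pos_less_divide_eq)
  have g2: "\<bar>C\<bar> * real j powr k * (1 + real i) powr k = \<bar>C\<bar> * (real j * (1 + real i)) powr k"
    using j by (simp add: powr_mult)
  have g3: "\<bar>C\<bar> * (real j * (1 + real i)) powr k \<ge> \<bar>C\<bar> * (1 + real j * real i) powr k"
  proof -
    have "1 + real j * real i \<le> real j * (1 + real i)" using j by (simp add: algebra_simps)
    then have "(1 + real j * real i) powr k \<le> (real j * (1 + real i)) powr k"
      using k by (intro powr_mono2) auto
    then show ?thesis by (simp add: mult_left_mono)
  qed
  have "C * (1 + real j * real i) powr k \<le> \<bar>C\<bar> * (1 + real j * real i) powr k"
    by (intro mult_right_mono) auto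
  then have "a ^ i > C * (1 + real j * real i) powr k" using g1 g2 g3 by linarith
  then show False using H[rule_format, of i] unfolding a_def by linarith
qed

lemma ball_mono: "d \<le> d' \<Longrightarrow> gball G L d \<subseteq> gball G L d'"
  unfolding gball_def by auto

lemma one_in_ball:
  assumes "group G" "length_function G L" "d \<ge> 0"
  shows "\<one>\<^bsub>G\<^esub> \<in> gball G L d"
  using assms unfolding gball_def length_function_def by (auto simp: group.is_monoid monoid.one_closed)

lemma folner_radius:
  fixes j :: nat
  assumes G: "group G" and L: "length_function G L"
    and pg: "\<And>d. d \<ge> 0 \<Longrightarrow> finite (gball G L d) \<and> real (card (gball G L d)) \<le> C * (1 + d) powr k"
    and k: "k \<ge> 0" and j: "j \<ge> 1"
  shows "\<exists>d::real. d \<ge> 0 \<and> real (card (gball G L (d + real j))) \<le> (1 + 1 / real j) * real (card (gball G L d))"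
proof (rule ccontr)
  assume "\<not> ?thesis"
  then have H: "\<And>d::real. d \<ge> 0 \<Longrightarrow> real (card (gball G L (d + real j))) > (1 + 1 / real j) * real (card (gball G L d))"
    by (meson not_le)
  have ind: "(1 + 1 / real j) ^ i \<le> real (card (gball G L (real j * real i)))" for i
  proof (induction i)
    case 0
    have "finite (gball G L 0)" using pg[of 0] by simp
    moreover have "\<one>\<^bsub>G\<^esub> \<in> gball G L 0" using one_in_ball[OF G L] by simp
    ultimately have "card (gball G L 0) \<ge> 1"
      by (metis One_nat_def Suc_leI card_gt_0_iff empty_iff)
    then show ?case by simp
  next
    case (Suc i)
    have eq: "real j * real (Suc i) = real j * real i + real j" by (simp add: algebra_simps)
    have "(1 + 1 / real j) ^ Suc i = (1 + 1 / real j) * (1 + 1 / real j) ^ i" by simp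
    also have "\<dots> \<le> (1 + 1 / real j) * real (card (gball G L (real j * real i)))"
      using Suc.IH by (intro mult_left_mono) auto
    also have "\<dots> < real (card (gball G L (real j * real i + real j)))"
      using H[of "real j * real i"] by simp
    finally show ?case unfolding eq by simp
  qed
  have "\<forall>i::nat. (1 + 1 / real j) ^ i \<le> C * (1 + real j * real i) powr k"
  proof
    fix i :: nat
    have "(1 + 1 / real j) ^ i \<le> real (card (gball G L (real j * real i)))" by (rule ind)
    also have "\<dots> \<le> C * (1 + real j * real i) powr k" using pg[of "real j * real i"] by simp
    finally show "(1 + 1 / real j) ^ i \<le> C * (1 + real j * real i) powr k" .
  qed
  then show False using exp_beats_poly[OF j k] by blast
qed

lemma sum_diff_bound:
  fixes f :: "'a \<Rightarrow> real"
  assumes fin: "finite B'" and A: "A \<subseteq> B'" and B: "B \<subseteq> B'" and c: "card A = card B"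
    and b: "\<And>y. y \<in> B' \<Longrightarrow> \<bar>f y\<bar> \<le> C"
  shows "\<bar>sum f A - sum f B\<bar> \<le> 2 * C * (real (card B') - real (card B))"
proof -
  have fA: "finite A" and fB: "finite B" using fin A B finite_subset by auto
  have C0: "C \<ge> 0" if "B' \<noteq> {}" using b that by (meson abs_ge_zero all_not_in_conv order_trans)
  have sA: "sum f A = sum f (A \<inter> B) + sum f (A - B)"
    using fA by (metis Int_Diff_Un Int_Diff_disjoint finite_Diff finite_Int sum.union_disjoint)
  have sB: "sum f B = sum f (A \<inter> B) + sum f (B - A)"
    using fB by (metis Int_Diff_Un Int_Diff_disjoint finite_Diff finite_Int inf_commute sum.union_disjoint)
  have cAB: "card (A - B) = card (B - A)"
  proof -
    have "card (A - B) = card A - card (A \<inter> B)" using fA by (simp add: card_Diff_subset_Int)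
    moreover have "card (B - A) = card B - card (A \<inter> B)" using fB
      by (metis card_Diff_subset_Int finite_Int inf_commute)
    ultimately show ?thesis using c by simp
  qed
  have cBA: "real (card (B - A)) \<le> real (card B') - real (card B)"
  proof -
    have "card (B - A) \<le> card (B' - B)" using cAB fin A
      by (metis Diff_mono card_mono finite_Diff order_refl)
    moreover have "card (B' - B) = card B' - card B" using fin B by (simp add: card_Diff_subset finite_subset)
    moreover have "card B \<le> card B'" using fin B by (simp add: card_mono)
    ultimately show ?thesis by simp
  qed
  have e1: "\<bar>sum f (A - B)\<bar> \<le> C * real (card (A - B))"
  proof -
    have "\<bar>sum f (A - B)\<bar> \<le> sum (\<lambda>x. \<bar>f x\<bar>) (A - B)" by (rule sum_abs)
    also have "\<dots> \<le> sum (\<lambda>x. C) (A - B)" using A by (intro sum_mono b) auto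
    finally show ?thesis by (simp add: mult.commute)
  qed
  have e2: "\<bar>sum f (B - A)\<bar> \<le> C * real (card (B - A))"
  proof -
    have "\<bar>sum f (B - A)\<bar> \<le> sum (\<lambda>x. \<bar>f x\<bar>) (B - A)" by (rule sum_abs)
    also have "\<dots> \<le> sum (\<lambda>x. C) (B - A)" using B by (intro sum_mono b) auto
    finally show ?thesis by (simp add: mult.commute)
  qed
  show ?thesis
  proof (cases "B' = {}")
    case True then show ?thesis using A B by simp
  next
    case False
    then have "C \<ge> 0" by (rule C0)
    have "\<bar>sum f A - sum f B\<bar> \<le> \<bar>sum f (A - B)\<bar> + \<bar>sum f (B - A)\<bar>" unfolding sA sB by simp
    also have "\<dots> \<le> C * real (card (B - A)) + C * real (card (B - A))" using e1 e2 cAB by simp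
    also have "\<dots> \<le> 2 * C * (real (card B') - real (card B))"
      using cBA \<open>C \<ge> 0\<close> by (simp add: mult_left_mono)
    finally show ?thesis .
  qed
qed


lemma amenable_of_polygrowth:
  assumes G: "group G" and L: "length_function G L"
    and pg: "\<And>d. d \<ge> 0 \<Longrightarrow> finite (gball G L d) \<and> real (card (gball G L d)) \<le> C * (1 + d) powr k"
    and k: "k \<ge> 0"
  shows "amenable G"
proof -
  interpret group G by (rule G)
  have "\<forall>j. \<exists>d::real. d \<ge> 0 \<and> real (card (gball G L (d + real (Suc j)))) \<le> (1 + 1 / real (Suc j)) * real (card (gball G L d))"
  proof
    fix j :: nat
    have "Suc j \<ge> 1" by simp
    from folner_radius[OF G L pg k this]
    show "\<exists>d::real. d \<ge> 0 \<and> real (card (gball G L (d + real (Suc j)))) \<le> (1 + 1 / real (Suc j)) * real (card (gball G L d))" .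
  qed
  then obtain D where D0: "\<And>j. D j \<ge> 0"
    and D: "\<And>j. real (card (gball G L (D j + real (Suc j)))) \<le> (1 + 1 / real (Suc j)) * real (card (gball G L (D j)))"
    by metis
  define Bj where "Bj j = gball G L (D j)" for j
  have finB: "finite (Bj j)" for j using pg[OF D0[of j]] by (simp add: Bj_def)
  have cpos: "card (Bj j) > 0" for j
    using finB[of j] one_in_ball[OF G L D0[of j]] unfolding Bj_def by (auto simp: card_gt_0_iff)
  have Bsub: "Bj j \<subseteq> carrier G" for j unfolding Bj_def gball_def by auto
  define avg where "avg f j = sum f (Bj j) / real (card (Bj j))" for f :: "'a \<Rightarrow> real" and j
  obtain F :: "nat filter" where Fb: "F \<noteq> bot" and Fs: "F \<le> sequentially"
    and Fu: "\<forall>P. eventually P F \<or> eventually (\<lambda>x. \<not> P x) F"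
    using ultrafilter_nat_exists by blast
  define m where "m f = Lim F (avg f)" for f
  have avg_bound: "\<bar>avg f j\<bar> \<le> C'" if "\<And>x. x \<in> carrier G \<Longrightarrow> \<bar>f x\<bar> \<le> C'" for f C' j
  proof -
    have "\<bar>sum f (Bj j)\<bar> \<le> sum (\<lambda>x. \<bar>f x\<bar>) (Bj j)" by (rule sum_abs)
    also have "\<dots> \<le> sum (\<lambda>x. C') (Bj j)" using Bsub that by (intro sum_mono) auto
    finally have "\<bar>sum f (Bj j)\<bar> \<le> real (card (Bj j)) * C'" by simp
    then show ?thesis using cpos[of j] unfolding avg_def by (simp add: divide_le_eq mult.commute)
  qed
  have conv: "(avg f \<longlongrightarrow> m f) F" if bfx: "bounded_on (carrier G) f" for f
  proof -
    obtain C' where "\<And>x. x \<in> carrier G \<Longrightarrow> \<bar>f x\<bar> \<le> C'" using bfx unfolding bounded_on_def by blast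
    then have "\<And>j. \<bar>avg f j\<bar> \<le> C'" by (rule avg_bound)
    then show ?thesis unfolding m_def by (rule ultra_tendsto[OF Fb Fu])
  qed
  have uniq: "a = b" if "(s \<longlongrightarrow> a) F" "(s \<longlongrightarrow> b) F" for s :: "nat \<Rightarrow> real" and a b
    using tendsto_unique[OF Fb that] .
  show ?thesis
    unfolding amenable_def
  proof (rule exI[of _ m], intro conjI allI impI ballI)
    fix f g :: "'a \<Rightarrow> real" assume bf: "bounded_on (carrier G) f" and bg: "bounded_on (carrier G) g"
    have "avg (\<lambda>x. f x + g x) = (\<lambda>j. avg f j + avg g j)"
      unfolding avg_def by (auto simp: sum.distrib add_divide_distrib)
    moreover have "bounded_on (carrier G) (\<lambda>x. f x + g x)" using bf bg unfolding bounded_on_def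
      by (metis (no_types, lifting) abs_triangle_ineq add_mono order_trans)
    ultimately have "((\<lambda>j. avg f j + avg g j) \<longlongrightarrow> m (\<lambda>x. f x + g x)) F" using conv by metis
    moreover have "((\<lambda>j. avg f j + avg g j) \<longlongrightarrow> m f + m g) F" using conv[OF bf] conv[OF bg] by (rule tendsto_add)
    ultimately show "m (\<lambda>x. f x + g x) = m f + m g" by (rule uniq)
  next
    fix f :: "'a \<Rightarrow> real" and c assume bf: "bounded_on (carrier G) f"
    have "avg (\<lambda>x. c * f x) = (\<lambda>j. c * avg f j)"
      unfolding avg_def by (auto simp: sum_distrib_left)
    moreover have "bounded_on (carrier G) (\<lambda>x. c * f x)" using bf unfolding bounded_on_def
      by (metis abs_mult mult_left_mono abs_ge_zero)
    ultimately have "((\<lambda>j. c * avg f j) \<longlongrightarrow> m (\<lambda>x. c * f x)) F" using conv by metis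
    moreover have "((\<lambda>j. c * avg f j) \<longlongrightarrow> c * m f) F" using conv[OF bf] by (rule tendsto_mult_left)
    ultimately show "m (\<lambda>x. c * f x) = c * m f" by (rule uniq)
  next
    fix f :: "'a \<Rightarrow> real" assume bf: "bounded_on (carrier G) f" and nn: "\<forall>x\<in>carrier G. 0 \<le> f x"
    have "\<forall>j. avg f j \<ge> 0" using nn Bsub unfolding avg_def by (auto intro!: sum_nonneg divide_nonneg_nonneg)
    then show "0 \<le> m f" using tendsto_lowerbound[OF conv[OF bf] _ Fb] by (simp add: always_eventually)
  next
    have "avg (\<lambda>x. 1) = (\<lambda>j. 1)" using cpos unfolding avg_def by auto
    moreover have "bounded_on (carrier G) (\<lambda>x. 1::real)" unfolding bounded_on_def by auto
    ultimately have "((\<lambda>j. 1) \<longlongrightarrow> m (\<lambda>x. 1)) F" using conv by metis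
    then show "m (\<lambda>x. 1) = 1" using uniq tendsto_const by metis
  next
    fix f :: "'a \<Rightarrow> real" and g assume g: "g \<in> carrier G" and bf: "bounded_on (carrier G) f"
    obtain C' where C': "\<And>x. x \<in> carrier G \<Longrightarrow> \<bar>f x\<bar> \<le> C'" using bf unfolding bounded_on_def by blast
    have C'0: "C' \<ge> 0" using C'[OF g] by linarith
    have bfg: "bounded_on (carrier G) (\<lambda>x. f (g \<otimes>\<^bsub>G\<^esub> x))" using C' g unfolding bounded_on_def by auto
    have est: "\<bar>avg (\<lambda>x. f (g \<otimes>\<^bsub>G\<^esub> x)) j - avg f j\<bar> \<le> 2 * C' / real (Suc j)" if gj: "L g \<le> real (Suc j)" for j
    proof -
      let ?B = "Bj j" and ?B' = "gball G L (D j + real (Suc j))"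
      let ?A = "(\<lambda>x. g \<otimes>\<^bsub>G\<^esub> x) ` ?B"
      have inj: "inj_on (\<lambda>x. g \<otimes>\<^bsub>G\<^esub> x) ?B" using inj_on_cmult[OF g] Bsub by (rule inj_on_subset)
      have s1: "sum (\<lambda>x. f (g \<otimes>\<^bsub>G\<^esub> x)) ?B = sum f ?A" using inj by (simp add: sum.reindex)
      have c1: "card ?A = card ?B" using inj by (rule card_image)
      have fin': "finite ?B'" using pg[of "D j + real (Suc j)"] D0[of j] by simp
      have AB': "?A \<subseteq> ?B'"
      proof
        fix y assume "y \<in> ?A"
        then obtain x where x: "x \<in> ?B" "y = g \<otimes>\<^bsub>G\<^esub> x" by auto
        have xc: "x \<in> carrier G" using x(1) Bsub by auto
        have "L y \<le> L g + L x" using L g xc x(2) unfolding length_function_def by auto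
        also have "\<dots> \<le> real (Suc j) + D j" using gj x(1) unfolding Bj_def gball_def by auto
        finally show "y \<in> ?B'" using g xc x(2) unfolding gball_def by auto
      qed
      have BB': "?B \<subseteq> ?B'" unfolding Bj_def by (rule ball_mono) simp
      have "\<bar>sum f ?A - sum f ?B\<bar> \<le> 2 * C' * (real (card ?B') - real (card ?B))"
        using fin' AB' BB' c1 by (rule sum_diff_bound) (use C' in \<open>auto simp: gball_def\<close>)
      also have "real (card ?B') - real (card ?B) \<le> real (card ?B) / real (Suc j)"
        using D[of j] unfolding Bj_def by (simp add: algebra_simps)
      then have "2 * C' * (real (card ?B') - real (card ?B)) \<le> 2 * C' * (real (card ?B) / real (Suc j))"
        using C'0 by (intro mult_left_mono) auto
      finally have "\<bar>sum f ?A - sum f ?B\<bar> \<le> 2 * C' * (real (card ?B) / real (Suc j))" .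
      then have "\<bar>sum f ?A - sum f ?B\<bar> / real (card ?B) \<le> 2 * C' / real (Suc j)"
        using cpos[of j] by (simp add: divide_le_eq field_simps)
      moreover have "avg (\<lambda>x. f (g \<otimes>\<^bsub>G\<^esub> x)) j - avg f j = (sum f ?A - sum f ?B) / real (card ?B)"
        unfolding avg_def s1 by (simp add: diff_divide_distrib)
      ultimately show ?thesis by simp
    qed
    have ev: "eventually (\<lambda>j. L g \<le> real (Suc j)) sequentially"
    proof (rule eventually_sequentiallyI[of "nat \<lceil>L g\<rceil>"])
      fix j assume "nat \<lceil>L g\<rceil> \<le> j"
      then show "L g \<le> real (Suc j)" by linarith
    qed
    have "((\<lambda>j. avg (\<lambda>x. f (g \<otimes>\<^bsub>G\<^esub> x)) j - avg f j) \<longlongrightarrow> 0) sequentially"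
    proof (rule Lim_null_comparison)
      show "eventually (\<lambda>j. norm (avg (\<lambda>x. f (g \<otimes>\<^bsub>G\<^esub> x)) j - avg f j) \<le> 2 * C' / real (Suc j)) sequentially"
        using ev by eventually_elim (use est in auto)
      show "((\<lambda>j. 2 * C' / real (Suc j)) \<longlongrightarrow> 0) sequentially" by real_asymp
    qed
    then have "((\<lambda>j. avg (\<lambda>x. f (g \<otimes>\<^bsub>G\<^esub> x)) j - avg f j) \<longlongrightarrow> 0) F" using Fs by (rule tendsto_mono[rotated])
    moreover have "((\<lambda>j. avg (\<lambda>x. f (g \<otimes>\<^bsub>G\<^esub> x)) j - avg f j) \<longlongrightarrow> m (\<lambda>x. f (g \<otimes>\<^bsub>G\<^esub> x)) - m f) F"
      using conv[OF bfg] conv[OF bf] by (rule tendsto_diff)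
    ultimately have "m (\<lambda>x. f (g \<otimes>\<^bsub>G\<^esub> x)) - m f = 0" using uniq by metis
    then show "m (\<lambda>x. f (g \<otimes>\<^bsub>G\<^esub> x)) = m f" by simp
  qed
qed


lemma lp_norm_nonneg: "lp_norm G q f \<ge> 0"
  unfolding lp_norm_def by simp

lemma lp_norm_cong: "(\<And>x. x \<in> carrier G \<Longrightarrow> f x = g x) \<Longrightarrow> lp_norm G q f = lp_norm G q g"
  unfolding lp_norm_def by (metis (no_types, lifting) infsum_cong)

lemma lp_space_finite:
  assumes "finite {x \<in> carrier G. f x \<noteq> 0}"
  shows "f \<in> lp_space G q"
proof -
  have "{x \<in> carrier G. norm (f x) powr q \<noteq> 0} \<subseteq> {x \<in> carrier G. f x \<noteq> 0}" by auto
  then have "finite {x \<in> carrier G. norm (f x) powr q \<noteq> 0}" using assms finite_subset by blast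
  then show ?thesis unfolding lp_space_def by (simp add: finite_nonzero_values_imp_summable_on)
qed

lemma lp_norm_point:
  assumes f: "f \<in> lp_space G q" and q: "q > 0" and x: "x \<in> carrier G"
  shows "norm (f x) \<le> lp_norm G q f"
proof (cases "f x = 0")
  case True then show ?thesis using lp_norm_nonneg by simp
next
  case False
  have "sum (\<lambda>x. norm (f x) powr q) {x} \<le> infsum (\<lambda>x. norm (f x) powr q) (carrier G)"
    using f x unfolding lp_space_def by (intro finite_sum_le_infsum) auto
  then have le: "norm (f x) powr q \<le> infsum (\<lambda>x. norm (f x) powr q) (carrier G)" by simp
  have "norm (f x) = (norm (f x) powr q) powr (1 / q)" using q False by (simp add: powr_powr)
  also have "\<dots> \<le> infsum (\<lambda>x. norm (f x) powr q) (carrier G) powr (1 / q)"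
    using le q by (intro powr_mono2) auto
  finally show ?thesis unfolding lp_norm_def .
qed

lemma lp_norm_indicator:
  assumes S: "finite S" "S \<subseteq> carrier G" and q: "q > 0"
  shows "lp_norm G q (\<lambda>x. if x \<in> S then 1 else 0) = real (card S) powr (1 / q)"
proof -
  have "infsum (\<lambda>x. norm (if x \<in> S then 1 else (0::complex)) powr q) (carrier G) = infsum (\<lambda>x. 1::real) S"
    by (rule infsum_cong_neutral) (use S q in auto)
  also have "\<dots> = real (card S)" using S by simp
  finally show ?thesis unfolding lp_norm_def by simp
qed


primrec cr :: "('a, 'b) monoid_scheme \<Rightarrow> 'a set \<Rightarrow> nat \<Rightarrow> 'a \<Rightarrow> real" where
  "cr G F 0 = (\<lambda>w. if w = \<one>\<^bsub>G\<^esub> then 1 else 0)"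
| "cr G F (Suc n) = (\<lambda>w. \<Sum>y\<in>F. cr G F n (inv\<^bsub>G\<^esub> y \<otimes>\<^bsub>G\<^esub> w))"

context group begin

lemma cr_nonneg: "cr G F n w \<ge> 0"
  by (induction n arbitrary: w) (auto intro: sum_nonneg)

lemma cr_supp:
  assumes F: "finite F" "F \<subseteq> carrier G"
  shows "finite {w \<in> carrier G. cr G F n w \<noteq> 0}"
proof (induction n)
  case 0
  have "{w \<in> carrier G. cr G F 0 w \<noteq> 0} \<subseteq> {\<one>}" by auto
  then show ?case using finite_subset by blast
next
  case (Suc n)
  let ?S = "{w \<in> carrier G. cr G F n w \<noteq> 0}"
  have "{w \<in> carrier G. cr G F (Suc n) w \<noteq> 0} \<subseteq> (\<lambda>(y, v). y \<otimes> v) ` (F \<times> ?S)"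
  proof
    fix w assume w: "w \<in> {w \<in> carrier G. cr G F (Suc n) w \<noteq> 0}"
    then obtain y where y: "y \<in> F" "cr G F n (inv y \<otimes> w) \<noteq> 0"
      by (auto elim: sum.not_neutral_contains_not_neutral)
    have yc: "y \<in> carrier G" using y F by auto
    have "w = y \<otimes> (inv y \<otimes> w)" using yc w by (simp add: m_assoc[symmetric])
    moreover have "inv y \<otimes> w \<in> ?S" using y yc w by auto
    ultimately show "w \<in> (\<lambda>(y, v). y \<otimes> v) ` (F \<times> ?S)" using y by force
  qed
  moreover have "finite ((\<lambda>(y, v). y \<otimes> v) ` (F \<times> ?S))" using F Suc by auto
  ultimately show ?case using finite_subset by blast
qed

lemma cr_conv:
  assumes F: "finite F" "F \<subseteq> carrier G" and x: "x \<in> carrier G"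
  shows "conv G (\<lambda>x. if x \<in> F then 1 else 0) (\<lambda>w. complex_of_real (cr G F n w)) x
      = complex_of_real (cr G F (Suc n) x)"
proof -
  have "{y \<in> carrier G. (if y \<in> F then 1 else 0::complex) \<noteq> 0} = F" using F by auto
  then show ?thesis unfolding conv_def by simp
qed

lemma cr_lp_bound:
  assumes F: "finite F" "F \<subseteq> carrier G" "\<forall>x\<in>F. L x \<le> d" and p: "p > 0"
    and RD: "\<forall>a\<in>group_algebra G. (\<forall>x\<in>carrier G. a x \<noteq> 0 \<longrightarrow> L x \<le> d) \<longrightarrow>
           (\<forall>f \<in> lp_space G p. lp_norm G p (conv G a f) \<le> poly P d * lp_norm G p a * lp_norm G p f)"
  shows "lp_norm G p (\<lambda>w. complex_of_real (cr G F n w)) \<le> (\<bar>poly P d\<bar> * real (card F) powr (1 / p)) ^ n"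
proof (induction n)
  case 0
  have "lp_norm G p (\<lambda>w. complex_of_real (cr G F 0 w)) = lp_norm G p (\<lambda>x. if x \<in> {\<one>} then 1 else 0)"
    by (rule lp_norm_cong) simp
  also have "\<dots> = 1" using p by (subst lp_norm_indicator) auto
  finally show ?case by simp
next
  case (Suc n)
  let ?a = "\<lambda>x. if x \<in> F then 1 else (0::complex)"
  let ?f = "\<lambda>w. complex_of_real (cr G F n w)"
  have ga: "?a \<in> group_algebra G"
  proof -
    have "{x \<in> carrier G. ?a x \<noteq> 0} \<subseteq> F" by auto
    then show ?thesis unfolding group_algebra_def using F finite_subset by auto
  qed
  have sa: "\<forall>x\<in>carrier G. ?a x \<noteq> 0 \<longrightarrow> L x \<le> d" using F by auto
  have fl: "?f \<in> lp_space G p"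
    by (rule lp_space_finite) (use cr_supp[OF F(1,2), of n] in simp)
  have la: "lp_norm G p ?a = real (card F) powr (1 / p)" using F p by (simp add: lp_norm_indicator)
  have "lp_norm G p (\<lambda>w. complex_of_real (cr G F (Suc n) w)) = lp_norm G p (conv G ?a ?f)"
    by (rule lp_norm_cong) (simp add: cr_conv[OF F(1,2)])
  also have "\<dots> \<le> poly P d * lp_norm G p ?a * lp_norm G p ?f"
  proof -
    from bspec[OF RD ga] sa have "\<forall>f \<in> lp_space G p. lp_norm G p (conv G ?a f) \<le> poly P d * lp_norm G p ?a * lp_norm G p f"
      by (rule mp)
    from bspec[OF this fl] show ?thesis .
  qed
  also have "\<dots> \<le> \<bar>poly P d\<bar> * lp_norm G p ?a * lp_norm G p ?f"
    using lp_norm_nonneg[of G p ?a] lp_norm_nonneg[of G p ?f]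
    by (intro mult_right_mono) auto
  also have "\<dots> \<le> \<bar>poly P d\<bar> * lp_norm G p ?a * (\<bar>poly P d\<bar> * real (card F) powr (1 / p)) ^ n"
    using Suc.IH lp_norm_nonneg[of G p ?a] by (intro mult_left_mono) auto
  finally show ?case unfolding la by simp
qed

end


context group begin

lemma decomp:
  assumes F: "finite F" "F \<subseteq> carrier G" "\<forall>x\<in>F. inv x \<in> F" "\<forall>x\<in>F. L x \<le> d" and p: "p > 0"
    and RD: "\<forall>a\<in>group_algebra G. (\<forall>x\<in>carrier G. a x \<noteq> 0 \<longrightarrow> L x \<le> d) \<longrightarrow>
           (\<forall>f \<in> lp_space G p. lp_norm G p (conv G a f) \<le> poly P d * lp_norm G p a * lp_norm G p f)"
  shows "\<exists>g1 g2 :: 'a \<Rightarrow> 'a \<Rightarrow> real.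
     (\<forall>x\<in>carrier G. \<forall>y\<in>carrier G. 0 \<le> g1 x y \<and> 0 \<le> g2 x y \<and>
         g1 x y + g2 x y = (if inv x \<otimes> y \<in> F then 1 else 0)) \<and>
     (\<forall>x\<in>carrier G. \<forall>Y. finite Y \<longrightarrow> Y \<subseteq> carrier G \<longrightarrow>
         sum (g1 x) Y \<le> 2 * (\<bar>poly P d\<bar> * real (card F) powr (1 / p)) + 1) \<and>
     (\<forall>y\<in>carrier G. \<forall>X. finite X \<longrightarrow> X \<subseteq> carrier G \<longrightarrow>
         sum (\<lambda>x. g2 x y) X \<le> 2 * (\<bar>poly P d\<bar> * real (card F) powr (1 / p)) + 1)"
proof -
  define \<rho> where "\<rho> = \<bar>poly P d\<bar> * real (card F) powr (1 / p)"
  define K where "K = 2 * \<rho> + 1"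
  have \<rho>0: "\<rho> \<ge> 0" unfolding \<rho>_def by simp
  have K0: "K > 0" and K1: "K \<ge> 1" and \<rho>K: "\<rho> < K" unfolding K_def using \<rho>0 by auto
  have crb: "cr G F n w \<le> \<rho> ^ n" if w: "w \<in> carrier G" for n w
  proof -
    have fl: "(\<lambda>w. complex_of_real (cr G F n w)) \<in> lp_space G p"
      by (rule lp_space_finite) (use cr_supp[OF F(1,2), of n] in simp)
    have "norm (complex_of_real (cr G F n w)) \<le> lp_norm G p (\<lambda>w. complex_of_real (cr G F n w))"
      by (rule lp_norm_point[OF fl p w])
    also have "\<dots> \<le> \<rho> ^ n" unfolding \<rho>_def by (rule cr_lp_bound[OF F(1,2,4) p RD])
    finally show ?thesis using cr_nonneg[of F n w] by simp
  qed
  define \<psi> where "\<psi> w = (\<Sum>n. cr G F n w / K ^ n)" for w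
  have summ: "summable (\<lambda>n. cr G F n w / K ^ n)" if w: "w \<in> carrier G" for w
  proof (rule summable_comparison_test'[OF summable_geometric[of "\<rho> / K"]])
    show "norm (\<rho> / K) < 1" using \<rho>0 \<rho>K K0 by simp
    fix n :: nat
    have "cr G F n w / K ^ n \<le> \<rho> ^ n / K ^ n" using crb[OF w] K0 by (intro divide_right_mono) auto
    then show "norm (cr G F n w / K ^ n) \<le> (\<rho> / K) ^ n"
      using cr_nonneg[of F n w] K0 by (simp add: power_divide)
  qed
  have split: "\<psi> w = cr G F 0 w + (\<Sum>n. cr G F (Suc n) w / K ^ Suc n)" if w: "w \<in> carrier G" for w
    using suminf_split_head[OF summ[OF w]] unfolding \<psi>_def by simp
  have sumS: "summable (\<lambda>n. cr G F (Suc n) w / K ^ Suc n)" if w: "w \<in> carrier G" for w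
    using summable_Suc_iff[of "\<lambda>n. cr G F n w / K ^ n", THEN iffD2, OF summ[OF w]] by (simp only:)
  have tail0: "(\<Sum>n. cr G F (Suc n) w / K ^ Suc n) \<ge> 0" if w: "w \<in> carrier G" for w
    using K0 by (intro suminf_nonneg sumS[OF w] divide_nonneg_nonneg cr_nonneg) auto
  have psi_ge: "\<psi> w \<ge> cr G F 0 w" if w: "w \<in> carrier G" for w using split[OF w] tail0[OF w] by simp
  have psi0: "\<psi> w \<ge> 0" if w: "w \<in> carrier G" for w using psi_ge[OF w] cr_nonneg[of F 0 w] by linarith
  have rec: "(\<Sum>y\<in>F. \<psi> (inv y \<otimes> w)) = K * (\<psi> w - cr G F 0 w)" if w: "w \<in> carrier G" for w
  proof -
    have yc: "\<And>y. y \<in> F \<Longrightarrow> inv y \<otimes> w \<in> carrier G" using F(2) w by auto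
    have "(\<Sum>y\<in>F. \<psi> (inv y \<otimes> w)) = (\<Sum>n. \<Sum>y\<in>F. cr G F n (inv y \<otimes> w) / K ^ n)"
      unfolding \<psi>_def by (rule suminf_sum[symmetric]) (rule summ[OF yc])
    also have "\<dots> = (\<Sum>n. K * (cr G F (Suc n) w / K ^ Suc n))"
      using K0 by (simp add: sum_divide_distrib[symmetric])
    also have "\<dots> = K * (\<Sum>n. cr G F (Suc n) w / K ^ Suc n)"
      by (rule suminf_mult) (rule sumS[OF w])
    also have "\<dots> = K * (\<psi> w - cr G F 0 w)" using split[OF w] by simp
    finally show ?thesis .
  qed
  have rowpsi: "(\<Sum>y\<in>F. \<psi> (inv y \<otimes> w)) \<le> K * \<psi> w" if w: "w \<in> carrier G" for w
    using rec[OF w] K0 cr_nonneg[of F 0 w] by (simp add: mult_left_mono)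
  have single: "\<psi> (inv y \<otimes> w) \<le> K * \<psi> w" if y: "y \<in> F" and w: "w \<in> carrier G" for y w
  proof -
    have "\<psi> (inv y \<otimes> w) \<le> (\<Sum>y\<in>F. \<psi> (inv y \<otimes> w))"
      using F y w by (intro member_le_sum psi0) auto
    then show ?thesis using rowpsi[OF w] by linarith
  qed
  define H where "H = {w \<in> carrier G. \<psi> w > 0}"
  have Hcl: "inv z \<otimes> u \<in> H \<longleftrightarrow> u \<in> H" if z: "z \<in> F" and u: "u \<in> carrier G" for z u
  proof -
    have zc: "z \<in> carrier G" using z F by auto
    have a1: "\<psi> (inv z \<otimes> u) \<le> K * \<psi> u" by (rule single[OF z u])
    have "\<psi> (inv (inv z) \<otimes> (inv z \<otimes> u)) \<le> K * \<psi> (inv z \<otimes> u)"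
      using F(3) z zc u by (intro single) auto
    moreover have "inv (inv z) \<otimes> (inv z \<otimes> u) = u" using zc u by (simp add: m_assoc[symmetric])
    ultimately have a2: "\<psi> u \<le> K * \<psi> (inv z \<otimes> u)" by simp
    have iz: "inv z \<otimes> u \<in> carrier G" using zc u by simp
    have "\<psi> (inv z \<otimes> u) > 0 \<longleftrightarrow> \<psi> u > 0"
    proof
      assume "\<psi> (inv z \<otimes> u) > 0"
      then have "K * \<psi> u > 0" using a1 by linarith
      then show "\<psi> u > 0" using K0 by (simp add: zero_less_mult_iff)
    next
      assume "\<psi> u > 0"
      then have "K * \<psi> (inv z \<otimes> u) > 0" using a2 by linarith
      then show "\<psi> (inv z \<otimes> u) > 0" using K0 by (simp add: zero_less_mult_iff)
    qed
    then show ?thesis unfolding H_def using iz u by blast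
  qed
  define rep where "rep x = (SOME r. r \<in> carrier G \<and> inv x \<otimes> r \<in> H)" for x
  have rep: "rep x \<in> carrier G \<and> inv x \<otimes> rep x \<in> H" if x: "x \<in> carrier G" for x
    unfolding rep_def
  proof (rule someI[of _ x])
    have "\<psi> \<one> \<ge> 1" using psi_ge[of \<one>] by simp
    then show "x \<in> carrier G \<and> inv x \<otimes> x \<in> H" using x unfolding H_def by simp
  qed
  have rep_shift: "rep (x \<otimes> z) = rep x" if x: "x \<in> carrier G" and z: "z \<in> F" for x z
  proof -
    have zc: "z \<in> carrier G" using z F by auto
    have "(\<lambda>r. r \<in> carrier G \<and> inv (x \<otimes> z) \<otimes> r \<in> H) = (\<lambda>r. r \<in> carrier G \<and> inv x \<otimes> r \<in> H)"
    proof (rule ext)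
      fix r
      show "(r \<in> carrier G \<and> inv (x \<otimes> z) \<otimes> r \<in> H) = (r \<in> carrier G \<and> inv x \<otimes> r \<in> H)"
      proof (cases "r \<in> carrier G")
        case True
        have "inv (x \<otimes> z) \<otimes> r = inv z \<otimes> (inv x \<otimes> r)" using x zc True by (simp add: inv_mult_group m_assoc)
        then show ?thesis using Hcl[OF z, of "inv x \<otimes> r"] x True by simp
      qed simp
    qed
    then show ?thesis unfolding rep_def by simp
  qed
  define \<phi> where "\<phi> x = \<psi> (inv x \<otimes> rep x)" for x
  have \<phi>pos: "\<phi> x > 0" if x: "x \<in> carrier G" for x using rep[OF x] unfolding \<phi>_def H_def by simp
  have row: "(\<Sum>z\<in>F. \<phi> (x \<otimes> z)) \<le> K * \<phi> x" if x: "x \<in> carrier G" for x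
  proof -
    have wc: "inv x \<otimes> rep x \<in> carrier G" using rep[OF x] x by auto
    have "(\<Sum>z\<in>F. \<phi> (x \<otimes> z)) = (\<Sum>z\<in>F. \<psi> (inv z \<otimes> (inv x \<otimes> rep x)))"
    proof (rule sum.cong)
      fix z assume z: "z \<in> F"
      have zc: "z \<in> carrier G" using z F by auto
      have "inv (x \<otimes> z) \<otimes> rep x = inv z \<otimes> (inv x \<otimes> rep x)"
        using x zc rep[OF x] by (simp add: inv_mult_group m_assoc)
      then show "\<phi> (x \<otimes> z) = \<psi> (inv z \<otimes> (inv x \<otimes> rep x))"
        unfolding \<phi>_def using rep_shift[OF x z] by simp
    qed simp
    also have "\<dots> \<le> K * \<phi> x" unfolding \<phi>_def by (rule rowpsi[OF wc])
    finally show ?thesis .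
  qed
  have col: "(\<Sum>z\<in>F. \<phi> (y \<otimes> inv z)) \<le> K * \<phi> y" if y: "y \<in> carrier G" for y
  proof -
    have "(\<Sum>z\<in>F. \<phi> (y \<otimes> inv z)) = (\<Sum>z\<in>F. \<phi> (y \<otimes> z))"
      by (rule sum.reindex_bij_witness[of _ "\<lambda>x. inv x" "\<lambda>x. inv x"]) (use F in auto)
    then show ?thesis using row[OF y] by simp
  qed
  define g1 where "g1 x y = (if inv x \<otimes> y \<in> F then \<phi> y / (\<phi> x + \<phi> y) else 0)" for x y
  define g2 where "g2 x y = (if inv x \<otimes> y \<in> F then \<phi> x / (\<phi> x + \<phi> y) else 0)" for x y
  have P1: "\<forall>x\<in>carrier G. \<forall>y\<in>carrier G. 0 \<le> g1 x y \<and> 0 \<le> g2 x y \<and>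
         g1 x y + g2 x y = (if inv x \<otimes> y \<in> F then 1 else 0)"
  proof (intro ballI)
    fix x y assume x: "x \<in> carrier G" and y: "y \<in> carrier G"
    have "\<phi> x + \<phi> y > 0" using \<phi>pos[OF x] \<phi>pos[OF y] by simp
    then show "0 \<le> g1 x y \<and> 0 \<le> g2 x y \<and> g1 x y + g2 x y = (if inv x \<otimes> y \<in> F then 1 else 0)"
      unfolding g1_def g2_def using \<phi>pos[OF x] \<phi>pos[OF y]
      by (auto simp: add_divide_distrib[symmetric])
  qed
  have P2: "\<forall>x\<in>carrier G. \<forall>Y. finite Y \<longrightarrow> Y \<subseteq> carrier G \<longrightarrow> sum (g1 x) Y \<le> K"
  proof (intro ballI allI impI)
    fix x Y assume x: "x \<in> carrier G" and Y: "finite Y" "Y \<subseteq> carrier G"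
    define h where "h y = (if inv x \<otimes> y \<in> F then \<phi> y / \<phi> x else 0)" for y
    let ?S = "(\<lambda>z. x \<otimes> z) ` F"
    have h0: "h y \<ge> 0" if "y \<in> carrier G" for y
      unfolding h_def using \<phi>pos[OF x] \<phi>pos[OF that] by auto
    have "sum (g1 x) Y \<le> sum h Y"
    proof (rule sum_mono)
      fix y assume "y \<in> Y"
      then have yc: "y \<in> carrier G" using Y by auto
      show "g1 x y \<le> h y" unfolding g1_def h_def using \<phi>pos[OF x] \<phi>pos[OF yc]
        by (auto intro!: divide_left_mono)
    qed
    also have "sum h Y = sum h (Y \<inter> ?S)"
    proof (rule sum.mono_neutral_right[OF Y(1)])
      show "Y \<inter> ?S \<subseteq> Y" by auto
      show "\<forall>i\<in>Y - Y \<inter> ?S. h i = 0"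
      proof
        fix y assume yY: "y \<in> Y - Y \<inter> ?S"
        then have yc: "y \<in> carrier G" using Y by auto
        show "h y = 0"
        proof (rule ccontr)
          assume "h y \<noteq> 0"
          then have "inv x \<otimes> y \<in> F" unfolding h_def by (auto split: if_splits)
          moreover have "y = x \<otimes> (inv x \<otimes> y)" using x yc by (simp add: m_assoc[symmetric])
          ultimately have "y \<in> ?S" by blast
          then show False using yY by blast
        qed
      qed
    qed
    also have "\<dots> \<le> sum h ?S"
      by (rule sum_mono2) (use F(1,2) x h0 in auto)
    also have "sum h ?S = (\<Sum>z\<in>F. h (x \<otimes> z))"
      using inj_on_subset[OF inj_on_cmult[OF x] F(2)] by (simp add: sum.reindex)
    also have "\<dots> = (\<Sum>z\<in>F. \<phi> (x \<otimes> z) / \<phi> x)"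
    proof (rule sum.cong)
      fix z assume z: "z \<in> F"
      then have "inv x \<otimes> (x \<otimes> z) = z" using F(2) x by (auto simp: m_assoc[symmetric])
      then show "h (x \<otimes> z) = \<phi> (x \<otimes> z) / \<phi> x" unfolding h_def using z by simp
    qed simp
    also have "\<dots> = (\<Sum>z\<in>F. \<phi> (x \<otimes> z)) / \<phi> x" by (simp add: sum_divide_distrib)
    also have "\<dots> \<le> K" using row[OF x] \<phi>pos[OF x] by (simp add: divide_le_eq)
    finally show "sum (g1 x) Y \<le> K" .
  qed
  have P3: "\<forall>y\<in>carrier G. \<forall>X. finite X \<longrightarrow> X \<subseteq> carrier G \<longrightarrow> sum (\<lambda>x. g2 x y) X \<le> K"
  proof (intro ballI allI impI)
    fix y X assume y: "y \<in> carrier G" and X: "finite X" "X \<subseteq> carrier G"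
    define h where "h x = (if inv x \<otimes> y \<in> F then \<phi> x / \<phi> y else 0)" for x
    let ?S = "(\<lambda>z. y \<otimes> inv z) ` F"
    have h0: "h x \<ge> 0" if "x \<in> carrier G" for x
      unfolding h_def using \<phi>pos[OF y] \<phi>pos[OF that] by auto
    have "sum (\<lambda>x. g2 x y) X \<le> sum h X"
    proof (rule sum_mono)
      fix x assume "x \<in> X"
      then have xc: "x \<in> carrier G" using X by auto
      show "g2 x y \<le> h x" unfolding g2_def h_def using \<phi>pos[OF y] \<phi>pos[OF xc]
        by (auto intro!: divide_left_mono)
    qed
    also have "sum h X = sum h (X \<inter> ?S)"
    proof (rule sum.mono_neutral_right[OF X(1)])
      show "X \<inter> ?S \<subseteq> X" by auto
      show "\<forall>i\<in>X - X \<inter> ?S. h i = 0"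
      proof
        fix x assume xX: "x \<in> X - X \<inter> ?S"
        then have xc: "x \<in> carrier G" using X by auto
        show "h x = 0"
        proof (rule ccontr)
          assume "h x \<noteq> 0"
          then have "inv x \<otimes> y \<in> F" unfolding h_def by (auto split: if_splits)
          moreover have "x = y \<otimes> inv (inv x \<otimes> y)" using xc y
            by (simp add: inv_mult_group m_assoc[symmetric])
          ultimately have "x \<in> ?S" by blast
          then show False using xX by blast
        qed
      qed
    qed
    also have "\<dots> \<le> sum h ?S"
      by (rule sum_mono2) (use F(1,2) y h0 in auto)
    also have "sum h ?S = (\<Sum>z\<in>F. h (y \<otimes> inv z))"
    proof -
      have "inj_on (\<lambda>z. y \<otimes> inv z) F"
      proof (rule inj_onI)
        fix a b assume a: "a \<in> F" and b: "b \<in> F" and e: "y \<otimes> inv a = y \<otimes> inv b"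
        have ac: "a \<in> carrier G" and bc: "b \<in> carrier G" using a b F(2) by auto
        then have "inv a = inv b" using e y by simp
        then show "a = b" using ac bc by (metis inv_inv)
      qed
      then show ?thesis by (simp add: sum.reindex)
    qed
    also have "\<dots> = (\<Sum>z\<in>F. \<phi> (y \<otimes> inv z) / \<phi> y)"
    proof (rule sum.cong)
      fix z assume z: "z \<in> F"
      then have "inv (y \<otimes> inv z) \<otimes> y = z" using F(2) y by (auto simp: inv_mult_group m_assoc)
      then show "h (y \<otimes> inv z) = \<phi> (y \<otimes> inv z) / \<phi> y" unfolding h_def using z by simp
    qed simp
    also have "\<dots> = (\<Sum>z\<in>F. \<phi> (y \<otimes> inv z)) / \<phi> y" by (simp add: sum_divide_distrib)
    also have "\<dots> \<le> K" using col[OF y] \<phi>pos[OF y] by (simp add: divide_le_eq)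
    finally show "sum (\<lambda>x. g2 x y) X \<le> K" .
  qed
  show ?thesis using P1 P2 P3 unfolding K_def \<rho>_def by blast
qed

end


lemma poly_growth_bound:
  fixes P :: "real poly"
  shows "\<exists>A m. A \<ge> 1 \<and> (\<forall>d::real. d \<ge> 0 \<longrightarrow> \<bar>poly P d\<bar> + 1 \<le> A * (1 + d) ^ m)"
proof -
  define S where "S = (\<Sum>i\<le>degree P. \<bar>coeff P i\<bar>)"
  have S0: "S \<ge> 0" unfolding S_def by (simp add: sum_nonneg)
  have "\<bar>poly P d\<bar> + 1 \<le> (S + 1) * (1 + d) ^ degree P" if d: "d \<ge> 0" for d :: real
  proof -
    have "\<bar>poly P d\<bar> \<le> (\<Sum>i\<le>degree P. \<bar>coeff P i * d ^ i\<bar>)" unfolding poly_altdef by (rule sum_abs)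
    also have "\<dots> \<le> (\<Sum>i\<le>degree P. \<bar>coeff P i\<bar> * (1 + d) ^ degree P)"
    proof (rule sum_mono)
      fix i assume i: "i \<in> {..degree P}"
      have "d ^ i \<le> (1 + d) ^ i" using d by (intro power_mono) auto
      also have "\<dots> \<le> (1 + d) ^ degree P" using d i by (intro power_increasing) auto
      finally show "\<bar>coeff P i * d ^ i\<bar> \<le> \<bar>coeff P i\<bar> * (1 + d) ^ degree P"
        using d by (simp add: abs_mult mult_left_mono)
    qed
    also have "\<dots> = S * (1 + d) ^ degree P" unfolding S_def by (simp add: sum_distrib_right)
    finally have "\<bar>poly P d\<bar> \<le> S * (1 + d) ^ degree P" .
    moreover have "1 \<le> (1 + d) ^ degree P" using d by simp
    ultimately show ?thesis by (simp add: algebra_simps)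
  qed
  then show ?thesis using S0 by (intro exI[of _ "S + 1"] exI[of _ "degree P"]) auto
qed

lemma nn_summable_bound:
  fixes g :: "'a \<Rightarrow> real"
  assumes nn: "\<And>x. x \<in> A \<Longrightarrow> 0 \<le> g x"
    and b: "\<And>Y. finite Y \<Longrightarrow> Y \<subseteq> A \<Longrightarrow> sum g Y \<le> C"
  shows "g summable_on A \<and> infsum g A \<le> C"
proof -
  have "bdd_above (sum g ` {F. F \<subseteq> A \<and> finite F})" using b by (auto intro!: bdd_aboveI)
  then have s: "g summable_on A" using nn by (rule nonneg_bdd_above_summable_on[rotated])
  moreover have "infsum g A \<le> C" using s b by (rule infsum_le_finite_sums)
  ultimately show ?thesis by blast
qed

lemma key_ineq:
  fixes B N p q :: real
  assumes B: "B \<ge> 1" and q: "0 < q" "q < p" and N: "N \<ge> B powr (q * p / (p - q))"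
  shows "N * (1 / (B * N powr (1 / p))) powr q \<ge> 1"
proof -
  have p: "p > 0" using q by simp
  have N1: "N \<ge> 1" using N B q by (smt (verit) divide_pos_pos ge_one_powr_ge_zero mult_pos_pos)
  have N0: "N > 0" using N1 by simp
  have "(1 / (B * N powr (1 / p))) powr q = B powr (- q) * N powr (- q / p)"
    using B N0 p by (simp add: powr_divide powr_mult powr_powr powr_minus_divide)
  then have eq: "N * (1 / (B * N powr (1 / p))) powr q = N powr (1 - q / p) / B powr q"
    using N0 B by (simp add: powr_diff powr_minus divide_inverse mult.commute)
  have e1: "(B powr (q * p / (p - q))) powr (1 - q / p) = B powr q"
  proof -
    have "q * p / (p - q) * (1 - q / p) = q" using p q by (simp add: field_simps)
    then show ?thesis by (simp add: powr_powr)
  qed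
  have "B powr q \<le> N powr (1 - q / p)"
    unfolding e1[symmetric] using N q B by (intro powr_mono2) auto
  moreover have "B powr q > 0" using B by simp
  ultimately show ?thesis unfolding eq by (simp add: le_divide_eq)
qed

lemma geom_finite_sum:
  assumes "finite N"
  shows "sum (\<lambda>n. (1/2::real) ^ n) N \<le> 2"
proof -
  have "sum (\<lambda>n. (1/2::real) ^ n) N \<le> (\<Sum>n. (1/2::real) ^ n)"
    by (rule sum_le_suminf) (use assms in \<open>auto intro: summable_geometric\<close>)
  also have "\<dots> = 2" using suminf_geometric[of "1/2::real"] by simp
  finally show ?thesis .
qed

lemma (in group) big_set:
  fixes P :: "real poly"
  assumes L: "length_function G L"
    and sp: "\<And>C k. k \<ge> 0 \<Longrightarrow> \<exists>d\<ge>0. \<not> (finite (gball G L d) \<and> real (card (gball G L d)) \<le> C * (1 + d) powr k)"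
    and Pv: "finite Prev" "Prev \<subseteq> carrier G" "\<forall>x\<in>Prev. inv x \<in> Prev"
    and s: "s > 0"
  shows "\<exists>d F. d \<ge> 0 \<and> finite F \<and> F \<subseteq> gball G L d - Prev \<and> (\<forall>x\<in>F. inv x \<in> F)
     \<and> real (card F) \<ge> (2 ^ n * (\<bar>poly P d\<bar> + 1)) powr s"
proof -
  obtain A m where A: "A \<ge> 1" and Am: "\<And>d::real. d \<ge> 0 \<Longrightarrow> \<bar>poly P d\<bar> + 1 \<le> A * (1 + d) ^ m"
    using poly_growth_bound[of P] by blast
  define C' where "C' = (2 ^ n * A) powr s + real (card Prev)"
  define k' where "k' = real m * s"
  have k'0: "k' \<ge> 0" unfolding k'_def using s by simp
  obtain d where d0: "d \<ge> 0" and nd: "\<not> (finite (gball G L d) \<and> real (card (gball G L d)) \<le> C' * (1 + d) powr k')"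
    using sp[OF k'0] by blast
  define T where "T = (2 ^ n * (\<bar>poly P d\<bar> + 1)) powr s"
  have Bge: "1 \<le> (2::real) ^ n * (\<bar>poly P d\<bar> + 1)"
  proof -
    have a: "(1::real) \<le> 2 ^ n" by simp
    have b: "1 \<le> \<bar>poly P d\<bar> + 1" by simp
    have "1 * 1 \<le> (2::real) ^ n * (\<bar>poly P d\<bar> + 1)" by (rule mult_mono[OF a b]) auto
    then show ?thesis by simp
  qed
  have T1: "T \<ge> 1" unfolding T_def using s Bge by (intro ge_one_powr_ge_zero) auto
  have bound: "T + real (card Prev) \<le> C' * (1 + d) powr k'"
  proof -
    have "T \<le> (2 ^ n * (A * (1 + d) ^ m)) powr s"
      unfolding T_def using Am[OF d0] s by (intro powr_mono2) auto
    also have "\<dots> = (2 ^ n * A) powr s * (1 + d) powr k'"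
      using A d0 unfolding k'_def by (simp add: powr_mult powr_realpow[symmetric] powr_powr mult.assoc)
    finally have t: "T \<le> (2 ^ n * A) powr s * (1 + d) powr k'" .
    have "real (card Prev) \<le> real (card Prev) * (1 + d) powr k'"
    proof -
      have "1 \<le> (1 + d) powr k'" using d0 k'0 by (intro ge_one_powr_ge_zero) auto
      then show ?thesis by (metis mult.right_neutral mult_left_mono of_nat_0_le_iff)
    qed
    then show ?thesis using t unfolding C'_def by (simp add: algebra_simps)
  qed
  have symB: "inv x \<in> gball G L d" if "x \<in> gball G L d" for x
    using that L unfolding gball_def length_function_def by auto
  show ?thesis
  proof (cases "finite (gball G L d)")
    case True
    then have cB: "real (card (gball G L d)) > C' * (1 + d) powr k'" using nd by simp
    define F where "F = gball G L d - Prev"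
    have "gball G L d \<subseteq> F \<union> Prev" unfolding F_def by blast
    then have "card (gball G L d) \<le> card (F \<union> Prev)" using True Pv(1) by (intro card_mono) (auto simp: F_def)
    also have "\<dots> \<le> card F + card Prev" by (rule card_Un_le)
    finally have "card (gball G L d) \<le> card F + card Prev" .
    then have "real (card F) \<ge> T" using cB bound by linarith
    moreover have "\<forall>x\<in>F. inv x \<in> F"
    proof
      fix x assume x: "x \<in> F"
      then have "x \<in> carrier G" unfolding F_def gball_def by auto
      moreover have "inv x \<notin> Prev"
      proof
        assume "inv x \<in> Prev"
        then have "inv (inv x) \<in> Prev" using Pv(3) by blast
        then show False using x \<open>x \<in> carrier G\<close> unfolding F_def by simp
      qed
      ultimately show "inv x \<in> F" using symB x unfolding F_def by auto
    qed
    moreover have "finite F" "F \<subseteq> gball G L d - Prev" unfolding F_def using True by auto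
    ultimately show ?thesis using d0 unfolding T_def by blast
  next
    case False
    then have "infinite (gball G L d - Prev)" using Pv(1) by simp
    then obtain F' where F': "finite F'" "card F' = nat \<lceil>T\<rceil>" "F' \<subseteq> gball G L d - Prev"
      using infinite_arbitrarily_large by blast
    define F where "F = F' \<union> (\<lambda>x. inv x) ` F'"
    have "F \<subseteq> gball G L d - Prev"
    proof
      fix y assume "y \<in> F"
      then consider "y \<in> F'" | x where "x \<in> F'" "y = inv x" unfolding F_def by blast
      then show "y \<in> gball G L d - Prev"
      proof cases
        case 1 then show ?thesis using F' by blast
      next
        case 2
        then have xB: "x \<in> gball G L d" "x \<notin> Prev" using F' by auto
        then have xc: "x \<in> carrier G" unfolding gball_def by auto
        have "inv x \<notin> Prev"
        proof
          assume "inv x \<in> Prev"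
          then have "inv (inv x) \<in> Prev" using Pv(3) by blast
          then show False using xB xc by simp
        qed
        then show ?thesis using 2 symB[OF xB(1)] by simp
      qed
    qed
    moreover have "\<forall>x\<in>F. inv x \<in> F"
    proof
      fix x assume x: "x \<in> F"
      then have xc: "x \<in> carrier G" using \<open>F \<subseteq> gball G L d - Prev\<close> unfolding gball_def by auto
      have F'c: "F' \<subseteq> carrier G" using F'(3) unfolding gball_def by auto
      from x consider "x \<in> F'" | y where "y \<in> F'" "x = inv y" unfolding F_def by blast
      then show "inv x \<in> F"
      proof cases
        case 1 then show ?thesis unfolding F_def by blast
      next
        case 2
        then have "inv x = y" using F'c by auto
        then show ?thesis using 2 unfolding F_def by blast
      qed
    qed
    moreover have "finite F" unfolding F_def using F' by simp
    moreover have "real (card F) \<ge> T"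
    proof -
      have "card F' \<le> card F" unfolding F_def using F' by (intro card_mono) auto
      then show ?thesis using F'(2) by linarith
    qed
    ultimately show ?thesis using d0 unfolding T_def by blast
  qed
qed


lemma block_sum_bound:
  fixes H :: "nat \<Rightarrow> 'b \<Rightarrow> real" and w :: "'b \<Rightarrow> 'a" and idx :: "'a \<Rightarrow> nat"
    and Fs :: "nat \<Rightarrow> 'a set" and c K :: "nat \<Rightarrow> real"
  assumes Y: "finite Y"
    and idx: "\<And>u n. u \<in> Fs n \<Longrightarrow> idx u = n"
    and Hb: "\<And>n Z. Z \<subseteq> Y \<Longrightarrow> sum (H n) Z \<le> K n"
    and c0: "\<And>n. c n \<ge> 0"
    and cK: "\<And>n. c n * K n \<le> 3 * (1/2) ^ n"
  shows "sum (\<lambda>y. if \<exists>n. w y \<in> Fs n then c (idx (w y)) * H (idx (w y)) y else 0) Y \<le> 6"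
proof -
  define v where "v y = (if \<exists>n. w y \<in> Fs n then c (idx (w y)) * H (idx (w y)) y else 0)" for y
  define Y' where "Y' = {y \<in> Y. \<exists>n. w y \<in> Fs n}"
  define g where "g y = idx (w y)" for y
  have fY': "finite Y'" unfolding Y'_def using Y by simp
  have "sum v Y = sum v Y'"
    by (rule sum.mono_neutral_right[OF Y]) (auto simp: Y'_def v_def)
  also have "\<dots> = (\<Sum>n\<in>g ` Y'. sum v {y \<in> Y'. g y = n})"
    by (rule sum.group[symmetric]) (use fY' in auto)
  also have "\<dots> \<le> (\<Sum>n\<in>g ` Y'. 3 * (1/2) ^ n)"
  proof (rule sum_mono)
    fix n assume "n \<in> g ` Y'"
    let ?Z = "{y \<in> Y'. g y = n}"
    have "sum v ?Z = sum (\<lambda>y. c n * H n y) ?Z"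
    proof (rule sum.cong)
      fix y assume y: "y \<in> ?Z"
      then obtain m where m: "w y \<in> Fs m" unfolding Y'_def by auto
      then have "idx (w y) = m" by (rule idx)
      moreover have "idx (w y) = n" using y unfolding g_def by simp
      ultimately show "v y = c n * H n y" using m unfolding v_def by auto
    qed simp
    also have "\<dots> = c n * sum (H n) ?Z" by (simp add: sum_distrib_left)
    also have "\<dots> \<le> c n * K n" using c0[of n] Hb[of ?Z n] unfolding Y'_def
      by (intro mult_left_mono) auto
    also have "\<dots> \<le> 3 * (1/2) ^ n" by (rule cK)
    finally show "sum v ?Z \<le> 3 * (1/2) ^ n" .
  qed
  also have "\<dots> = 3 * (\<Sum>n\<in>g ` Y'. (1/2) ^ n)" by (simp add: sum_distrib_left)
  also have "\<dots> \<le> 3 * 2" using geom_finite_sum[of "g ` Y'"] fY' by simp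
  finally show ?thesis unfolding v_def by simp
qed


primrec accum :: "(nat \<Rightarrow> 'a set \<Rightarrow> 'a set) \<Rightarrow> nat \<Rightarrow> 'a set" where
  "accum h 0 = {}"
| "accum h (Suc n) = accum h n \<union> h n (accum h n)"

lemma cK_bound:
  fixes a r :: real and n :: nat
  assumes a: "a \<ge> 0" and r: "r \<ge> 1"
  shows "1 / (2 ^ n * (a + 1) * r) * (2 * (a * r) + 1) \<le> 3 * (1/2) ^ n"
proof -
  have pos: "2 ^ n * (a + 1) * r > 0" using a r by simp
  have "2 * (a * r) + 1 \<le> 3 * ((a + 1) * r)" using a r by (simp add: algebra_simps) (smt (verit) mult_nonneg_nonneg)
  then have "(2 * (a * r) + 1) / (2 ^ n * (a + 1) * r) \<le> 3 * ((a + 1) * r) / (2 ^ n * (a + 1) * r)"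
    using pos by (intro divide_right_mono) auto
  also have "\<dots> = 3 / 2 ^ n"
  proof -
    have x: "(a + 1) * r \<noteq> 0" using a r by simp
    have "3 * ((a + 1) * r) / (2 ^ n * (a + 1) * r) = (3 * ((a + 1) * r)) / (2 ^ n * ((a + 1) * r))"
      by (simp add: mult.assoc)
    also have "\<dots> = 3 / 2 ^ n" using x by (rule nonzero_mult_divide_mult_cancel_right)
    finally show ?thesis .
  qed
  finally show ?thesis by (simp add: power_divide)
qed

context group begin

lemma construct:
  fixes P :: "real poly"
  assumes L: "length_function G L"
    and RD: "\<forall>d\<ge>0. \<forall>a\<in>group_algebra G. (\<forall>x\<in>carrier G. a x \<noteq> 0 \<longrightarrow> L x \<le> d) \<longrightarrow>
           (\<forall>f \<in> lp_space G p. lp_norm G p (conv G a f) \<le> poly P d * lp_norm G p a * lp_norm G p f)"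
    and sp: "\<And>C k. k \<ge> 0 \<Longrightarrow> \<exists>d\<ge>0. \<not> (finite (gball G L d) \<and> real (card (gball G L d)) \<le> C * (1 + d) powr k)"
    and q: "0 < q" "q < p"
  shows "\<exists>f. f \<in> T1 G \<and> f \<notin> lp_space G q"
proof -
  have p: "p > 0" using q by simp
  define s where "s = q * p / (p - q)"
  have s0: "s > 0" unfolding s_def using q by simp
  define Q where "Q n S d F \<longleftrightarrow> d \<ge> 0 \<and> finite F \<and> F \<subseteq> gball G L d - S \<and> (\<forall>x\<in>F. inv x \<in> F)
     \<and> real (card F) \<ge> (2 ^ n * (\<bar>poly P d\<bar> + 1)) powr s" for n S d F
  define ch where "ch n S = (SOME z. Q n S (fst z) (snd z))" for n S
  have chQ: "Q n S (fst (ch n S)) (snd (ch n S))"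
    if Sp: "finite S" "S \<subseteq> carrier G" "\<forall>x\<in>S. inv x \<in> S" for n S
  proof -
    obtain d F where "Q n S d F" using big_set[OF L sp Sp s0, of n P] unfolding Q_def by blast
    then have "\<exists>z. Q n S (fst z) (snd z)" by (intro exI[of _ "(d, F)"]) simp
    then show ?thesis unfolding ch_def by (rule someI_ex)
  qed
  define U where "U = accum (\<lambda>n S. snd (ch n S))"
  have Uprop: "finite (U n) \<and> U n \<subseteq> carrier G \<and> (\<forall>x\<in>U n. inv x \<in> U n)" for n
  proof (induction n)
    case 0 then show ?case unfolding U_def by simp
  next
    case (Suc n)
    have Q1: "Q n (U n) (fst (ch n (U n))) (snd (ch n (U n)))" using Suc by (intro chQ) auto
    then have "finite (snd (ch n (U n)))" "snd (ch n (U n)) \<subseteq> carrier G"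
      "\<forall>x\<in>snd (ch n (U n)). inv x \<in> snd (ch n (U n))"
      unfolding Q_def gball_def by auto
    then show ?case using Suc unfolding U_def by auto
  qed
  define Fs where "Fs n = snd (ch n (U n))" for n
  define ds where "ds n = fst (ch n (U n))" for n
  have FQ: "Q n (U n) (ds n) (Fs n)" for n unfolding Fs_def ds_def using Uprop[of n] by (intro chQ) auto
  have USuc: "U (Suc n) = U n \<union> Fs n" for n unfolding U_def Fs_def by simp
  have Umono: "U m \<subseteq> U n" if "m \<le> n" for m n
    using that
  proof (induction n)
    case 0 then show ?case by simp
  next
    case (Suc n) then show ?case using USuc[of n] by (auto simp: le_Suc_eq)
  qed
  have Ffin: "finite (Fs n)" and Fc: "Fs n \<subseteq> carrier G" and Fsym: "\<forall>x\<in>Fs n. inv x \<in> Fs n"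
    and FL: "\<forall>x\<in>Fs n. L x \<le> ds n" and FU: "Fs n \<inter> U n = {}" and ds0: "ds n \<ge> 0" for n
    using FQ[of n] unfolding Q_def gball_def by auto
  define B where "B n = 2 ^ n * (\<bar>poly P (ds n)\<bar> + 1)" for n
  have B1: "B n \<ge> 1" for n
  proof -
    have a: "(1::real) \<le> 2 ^ n" by simp
    have b: "1 \<le> \<bar>poly P (ds n)\<bar> + 1" by simp
    have "1 * 1 \<le> B n" unfolding B_def by (rule mult_mono[OF a b]) auto
    then show ?thesis by simp
  qed
  have Fcard: "real (card (Fs n)) \<ge> B n powr s" for n using FQ[of n] unfolding Q_def B_def by auto
  have Fcard1: "real (card (Fs n)) \<ge> 1" for n
    using Fcard[of n] B1[of n] s0 ge_one_powr_ge_zero[of "B n" s] by linarith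
  have Fsub: "Fs m \<subseteq> U n" if "m < n" for m n
    using USuc[of m] Umono[of "Suc m" n] that by auto
  have disj: "Fs m \<inter> Fs n = {}" if "m \<noteq> n" for m n
  proof (cases "m < n")
    case True then show ?thesis using Fsub[OF True] FU[of n] by blast
  next
    case False then have "n < m" using that by simp
    then show ?thesis using Fsub[of n m] FU[of m] by blast
  qed
  define idx where "idx w = (THE n. w \<in> Fs n)" for w
  have idx_eq: "idx w = n" if "w \<in> Fs n" for w n
    unfolding idx_def using that disj by (intro the_equality) auto
  define c where "c n = 1 / (B n * real (card (Fs n)) powr (1 / p))" for n
  have c0: "c n > 0" for n unfolding c_def using B1[of n] Fcard1[of n] by simp
  define K where "K n = 2 * (\<bar>poly P (ds n)\<bar> * real (card (Fs n)) powr (1 / p)) + 1" for n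
  have cK: "c n * K n \<le> 3 * (1/2) ^ n" for n
  proof -
    have r1: "real (card (Fs n)) powr (1 / p) \<ge> 1" using Fcard1[of n] p by (intro ge_one_powr_ge_zero) auto
    show ?thesis unfolding c_def K_def B_def using cK_bound[of "\<bar>poly P (ds n)\<bar>" "real (card (Fs n)) powr (1 / p)" n, OF abs_ge_zero r1]
      by (simp add: mult.assoc)
  qed
  have "\<forall>n. \<exists>g1 g2 :: 'a \<Rightarrow> 'a \<Rightarrow> real.
     (\<forall>x\<in>carrier G. \<forall>y\<in>carrier G. 0 \<le> g1 x y \<and> 0 \<le> g2 x y \<and>
         g1 x y + g2 x y = (if inv x \<otimes> y \<in> Fs n then 1 else 0)) \<and>
     (\<forall>x\<in>carrier G. \<forall>Y. finite Y \<longrightarrow> Y \<subseteq> carrier G \<longrightarrow> sum (g1 x) Y \<le> K n) \<and>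
     (\<forall>y\<in>carrier G. \<forall>X. finite X \<longrightarrow> X \<subseteq> carrier G \<longrightarrow> sum (\<lambda>x. g2 x y) X \<le> K n)"
  proof
    fix n
    from spec[OF RD, of "ds n"] ds0[of n]
    have RDn: "\<forall>a\<in>group_algebra G. (\<forall>x\<in>carrier G. a x \<noteq> 0 \<longrightarrow> L x \<le> ds n) \<longrightarrow>
           (\<forall>f \<in> lp_space G p. lp_norm G p (conv G a f) \<le> poly P (ds n) * lp_norm G p a * lp_norm G p f)"
      by (rule mp)
    show "\<exists>g1 g2 :: 'a \<Rightarrow> 'a \<Rightarrow> real.
     (\<forall>x\<in>carrier G. \<forall>y\<in>carrier G. 0 \<le> g1 x y \<and> 0 \<le> g2 x y \<and>
         g1 x y + g2 x y = (if inv x \<otimes> y \<in> Fs n then 1 else 0)) \<and>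
     (\<forall>x\<in>carrier G. \<forall>Y. finite Y \<longrightarrow> Y \<subseteq> carrier G \<longrightarrow> sum (g1 x) Y \<le> K n) \<and>
     (\<forall>y\<in>carrier G. \<forall>X. finite X \<longrightarrow> X \<subseteq> carrier G \<longrightarrow> sum (\<lambda>x. g2 x y) X \<le> K n)"
      unfolding K_def by (rule decomp[OF Ffin Fc Fsym FL p RDn])
  qed
  then obtain G1 where "\<forall>n. \<exists>g2 :: 'a \<Rightarrow> 'a \<Rightarrow> real.
     (\<forall>x\<in>carrier G. \<forall>y\<in>carrier G. 0 \<le> G1 n x y \<and> 0 \<le> g2 x y \<and>
         G1 n x y + g2 x y = (if inv x \<otimes> y \<in> Fs n then 1 else 0)) \<and>
     (\<forall>x\<in>carrier G. \<forall>Y. finite Y \<longrightarrow> Y \<subseteq> carrier G \<longrightarrow> sum (G1 n x) Y \<le> K n) \<and>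
     (\<forall>y\<in>carrier G. \<forall>X. finite X \<longrightarrow> X \<subseteq> carrier G \<longrightarrow> sum (\<lambda>x. g2 x y) X \<le> K n)"
    by (rule choice[THEN exE]) blast
  then obtain G2 where GP: "\<forall>n.
     (\<forall>x\<in>carrier G. \<forall>y\<in>carrier G. 0 \<le> G1 n x y \<and> 0 \<le> G2 n x y \<and>
         G1 n x y + G2 n x y = (if inv x \<otimes> y \<in> Fs n then 1 else 0)) \<and>
     (\<forall>x\<in>carrier G. \<forall>Y. finite Y \<longrightarrow> Y \<subseteq> carrier G \<longrightarrow> sum (G1 n x) Y \<le> K n) \<and>
     (\<forall>y\<in>carrier G. \<forall>X. finite X \<longrightarrow> X \<subseteq> carrier G \<longrightarrow> sum (\<lambda>x. G2 n x y) X \<le> K n)"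
    by (rule choice[THEN exE]) blast
  have G1n: "0 \<le> G1 n x y" and G2n: "0 \<le> G2 n x y"
    and G12: "G1 n x y + G2 n x y = (if inv x \<otimes> y \<in> Fs n then 1 else 0)"
    if "x \<in> carrier G" "y \<in> carrier G" for n x y using GP that by blast+
  have G1b: "sum (G1 n x) Y \<le> K n" if "x \<in> carrier G" "finite Y" "Y \<subseteq> carrier G" for n x Y
    using GP that by blast
  have G2b: "sum (\<lambda>x. G2 n x y) X \<le> K n" if "y \<in> carrier G" "finite X" "X \<subseteq> carrier G" for n y X
    using GP that by blast
  define f where "f x = (if \<exists>n. x \<in> Fs n then complex_of_real (c (idx x)) else 0)" for x
  define f1 where "f1 x y = (if \<exists>n. inv x \<otimes> y \<in> Fs n
      then complex_of_real (c (idx (inv x \<otimes> y)) * G1 (idx (inv x \<otimes> y)) x y) else 0)" for x y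
  define f2 where "f2 x y = (if \<exists>n. inv x \<otimes> y \<in> Fs n
      then complex_of_real (c (idx (inv x \<otimes> y)) * G2 (idx (inv x \<otimes> y)) x y) else 0)" for x y
  have fT1: "f \<in> T1 G"
  proof -
    have eq: "\<forall>x\<in>carrier G. \<forall>y\<in>carrier G. f (inv x \<otimes> y) = f1 x y + f2 x y"
    proof (intro ballI)
      fix x y assume x: "x \<in> carrier G" and y: "y \<in> carrier G"
      show "f (inv x \<otimes> y) = f1 x y + f2 x y"
      proof (cases "\<exists>n. inv x \<otimes> y \<in> Fs n")
        case True
        then obtain n where n: "inv x \<otimes> y \<in> Fs n" by blast
        have i: "idx (inv x \<otimes> y) = n" by (rule idx_eq[OF n])
        have "G1 n x y + G2 n x y = 1" using G12[OF x y, of n] n by simp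
        then have cc: "c n * G1 n x y + c n * G2 n x y = c n" by (simp add: distrib_left[symmetric])
        have "f1 x y + f2 x y = complex_of_real (c n * G1 n x y) + complex_of_real (c n * G2 n x y)"
          unfolding f1_def f2_def using True i by simp
        also have "\<dots> = complex_of_real (c n)" unfolding of_real_add[symmetric] cc ..
        also have "\<dots> = f (inv x \<otimes> y)" unfolding f_def using True i by simp
        finally show ?thesis by simp
      next
        case False then show ?thesis unfolding f_def f1_def f2_def by simp
      qed
    qed
    have c0': "\<And>n. c n \<ge> 0" using c0 less_imp_le by blast
    have row: "\<forall>x\<in>carrier G. (\<lambda>y. norm (f1 x y)) summable_on carrier G \<and>
        infsum (\<lambda>y. norm (f1 x y)) (carrier G) \<le> 6"
    proof
      fix x assume x: "x \<in> carrier G"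
      show "(\<lambda>y. norm (f1 x y)) summable_on carrier G \<and> infsum (\<lambda>y. norm (f1 x y)) (carrier G) \<le> 6"
      proof (rule nn_summable_bound)
        fix Y assume Y: "finite Y" "Y \<subseteq> carrier G"
        have nrm: "norm (f1 x y) = (if \<exists>n. inv x \<otimes> y \<in> Fs n
            then c (idx (inv x \<otimes> y)) * G1 (idx (inv x \<otimes> y)) x y else 0)" if y: "y \<in> carrier G" for y
          unfolding f1_def using c0' G1n[OF x y] by (auto simp: abs_of_nonneg norm_mult)
        have "sum (\<lambda>y. norm (f1 x y)) Y = sum (\<lambda>y. if \<exists>n. inv x \<otimes> y \<in> Fs n
            then c (idx (inv x \<otimes> y)) * G1 (idx (inv x \<otimes> y)) x y else 0) Y"
          by (intro sum.cong refl nrm) (use Y in auto)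
        also have "\<dots> \<le> 6"
        proof (rule block_sum_bound[where Fs=Fs and idx=idx and K=K and c=c])
          show "finite Y" by (rule Y(1))
          show "\<And>u n. u \<in> Fs n \<Longrightarrow> idx u = n" by (rule idx_eq)
          show "sum (\<lambda>y. G1 n x y) Z \<le> K n" if Z: "Z \<subseteq> Y" for n Z
          proof -
            have "finite Z" using Z Y(1) by (rule finite_subset)
            moreover have "Z \<subseteq> carrier G" using Z Y(2) by (rule order_trans)
            ultimately show ?thesis using G1b[OF x] by simp
          qed
          show "\<And>n. c n \<ge> 0" by (rule c0')
          show "\<And>n. c n * K n \<le> 3 * (1/2) ^ n" by (rule cK)
        qed
        finally show "sum (\<lambda>y. norm (f1 x y)) Y \<le> 6" .
      qed simp
    qed
    have col: "\<forall>y\<in>carrier G. (\<lambda>x. norm (f2 x y)) summable_on carrier G \<and>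
        infsum (\<lambda>x. norm (f2 x y)) (carrier G) \<le> 6"
    proof
      fix y assume y: "y \<in> carrier G"
      show "(\<lambda>x. norm (f2 x y)) summable_on carrier G \<and> infsum (\<lambda>x. norm (f2 x y)) (carrier G) \<le> 6"
      proof (rule nn_summable_bound)
        fix X assume X: "finite X" "X \<subseteq> carrier G"
        have nrm: "norm (f2 x y) = (if \<exists>n. inv x \<otimes> y \<in> Fs n
            then c (idx (inv x \<otimes> y)) * G2 (idx (inv x \<otimes> y)) x y else 0)" if x: "x \<in> carrier G" for x
          unfolding f2_def using c0' G2n[OF x y] by (auto simp: abs_of_nonneg norm_mult)
        have "sum (\<lambda>x. norm (f2 x y)) X = sum (\<lambda>x. if \<exists>n. inv x \<otimes> y \<in> Fs n
            then c (idx (inv x \<otimes> y)) * G2 (idx (inv x \<otimes> y)) x y else 0) X"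
          by (intro sum.cong refl nrm) (use X in auto)
        also have "\<dots> \<le> 6"
        proof (rule block_sum_bound[where Fs=Fs and idx=idx and K=K and c=c])
          show "finite X" by (rule X(1))
          show "\<And>u n. u \<in> Fs n \<Longrightarrow> idx u = n" by (rule idx_eq)
          show "sum (\<lambda>x. G2 n x y) Z \<le> K n" if Z: "Z \<subseteq> X" for n Z
          proof -
            have "finite Z" using Z X(1) by (rule finite_subset)
            moreover have "Z \<subseteq> carrier G" using Z X(2) by (rule order_trans)
            ultimately show ?thesis using G2b[OF y] by simp
          qed
          show "\<And>n. c n \<ge> 0" by (rule c0')
          show "\<And>n. c n * K n \<le> 3 * (1/2) ^ n" by (rule cK)
        qed
        finally show "sum (\<lambda>x. norm (f2 x y)) X \<le> 6" .
      qed simp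
    qed
    show ?thesis unfolding T1_def mem_Collect_eq
    proof (rule exI[of _ f1], rule exI[of _ f2], intro conjI)
      show "\<forall>x\<in>carrier G. \<forall>y\<in>carrier G. f (inv x \<otimes> y) = f1 x y + f2 x y" by (rule eq)
      show "\<exists>C. \<forall>x\<in>carrier G. (\<lambda>y. norm (f1 x y)) summable_on carrier G \<and>
          infsum (\<lambda>y. norm (f1 x y)) (carrier G) \<le> C" using row by blast
      show "\<exists>C. \<forall>y\<in>carrier G. (\<lambda>x. norm (f2 x y)) summable_on carrier G \<and>
          infsum (\<lambda>x. norm (f2 x y)) (carrier G) \<le> C" using col by blast
    qed
  qed
  have fnot: "f \<notin> lp_space G q"
  proof
    assume fl: "f \<in> lp_space G q"
    let ?g = "\<lambda>x. norm (f x) powr q"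
    have sm: "?g summable_on carrier G" using fl unfolding lp_space_def by simp
    have fv: "f x = complex_of_real (c n)" if "x \<in> Fs n" for x n
      using that idx_eq unfolding f_def by auto
    have blk: "sum ?g (Fs n) \<ge> 1" for n
    proof -
      have "sum ?g (Fs n) = sum (\<lambda>x. c n powr q) (Fs n)"
        using fv c0[of n] by (intro sum.cong) auto
      also have "\<dots> = real (card (Fs n)) * c n powr q" by simp
      finally have e: "sum ?g (Fs n) = real (card (Fs n)) * c n powr q" .
      have "1 \<le> real (card (Fs n)) * (1 / (B n * real (card (Fs n)) powr (1 / p))) powr q"
        by (rule key_ineq[OF B1 q]) (use Fcard[of n] in \<open>simp add: s_def\<close>)
      then show ?thesis unfolding e c_def .
    qed
    have lower: "real n \<le> sum ?g (U n)" for n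
    proof (induction n)
      case 0 then show ?case by (simp add: U_def)
    next
      case (Suc n)
      have "sum ?g (U (Suc n)) = sum ?g (U n) + sum ?g (Fs n)"
        unfolding USuc using Uprop[of n] Ffin[of n] FU[of n] by (subst sum.union_disjoint) auto
      then show ?case using Suc blk[of n] by simp
    qed
    have upper: "sum ?g (U n) \<le> infsum ?g (carrier G)" for n
      using sm Uprop[of n] by (intro finite_sum_le_infsum) auto
    obtain n :: nat where "real n > infsum ?g (carrier G)" using reals_Archimedean2 by blast
    then show False using lower[of n] upper[of n] by linarith
  qed
  show ?thesis using fT1 fnot by blast
qed

end

theorem corollary8p2:
  fixes G :: "('a, 'b) monoid_scheme" and p :: real
  assumes "group G"
    and "\<not> amenable G"
    and "1 \<le> p" and "p \<le> 2"
    and "property_RD G p"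
  shows "Lit G \<ge> ereal p"
proof -
  obtain L and P :: "real poly" where L: "length_function G L"
    and RD: "\<forall>d\<ge>0. \<forall>a\<in>group_algebra G. (\<forall>x\<in>carrier G. a x \<noteq> 0 \<longrightarrow> L x \<le> d) \<longrightarrow>
           (\<forall>f \<in> lp_space G p. lp_norm G p (conv G a f) \<le> poly P d * lp_norm G p a * lp_norm G p f)"
    using assms(5) unfolding property_RD_def by blast
  show ?thesis unfolding Lit_def
  proof (rule Inf_greatest)
    fix x assume "x \<in> {ereal q |q. q > 0 \<and> T1 G \<subseteq> lp_space G q}"
    then obtain q where x: "x = ereal q" "q > 0" "T1 G \<subseteq> lp_space G q" by blast
    show "ereal p \<le> x"
    proof (rule ccontr)
      assume "\<not> ereal p \<le> x"
      then have qp: "q < p" using x(1) by simp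
      show False
      proof (cases "\<exists>C k. k \<ge> 0 \<and> (\<forall>d\<ge>0. finite (gball G L d) \<and> real (card (gball G L d)) \<le> C * (1 + d) powr k)")
        case True
        then obtain C k where k: "k \<ge> 0"
          and pg: "\<forall>d\<ge>0. finite (gball G L d) \<and> real (card (gball G L d)) \<le> C * (1 + d) powr k" by blast
        have "amenable G" using amenable_of_polygrowth[OF assms(1) L _ k] pg by blast
        then show False using assms(2) by simp
      next
        case False
        then have sp: "\<And>C k. k \<ge> 0 \<Longrightarrow> \<exists>d\<ge>0. \<not> (finite (gball G L d) \<and> real (card (gball G L d)) \<le> C * (1 + d) powr k)"
          by blast
        obtain f where "f \<in> T1 G" "f \<notin> lp_space G q"
          using group.construct[OF assms(1) L RD sp x(2) qp] by blast
        then show False using x(3) by blast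
      qed
    qed
  qed
qed

end
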